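(* Let $q\ge5$. The imaginary chords of the twisted cubic $\mathcal{C}$ form one orbit under $G_q$, and the subgroup of $G_q$ fixing an imaginary chord has size $2(q+1)$. For $q$ odd, let $\rho$ be a non-square in $\mathbb{F}_q$; the line $\ell_1$ through $P(1,0,\rho,0)$ and $P(0,1,0,\rho)$ is an imaginary chord, and every element of the subgroup of $G_q$ fixing $\ell_1$ has a matrix of the form $\begin{pmatrix}\alpha d^3&\alpha\rho bd^2&\alpha\rho^2b^2d&\alpha\rho^3b^3\\ 3bd^2&d^3+2\rho b^2d&\rho^2b^3+2\rho bd^2&3\rho^2b^2d\\ 3\alpha b^2d&\alpha\rho b^3+2\alpha bd^2&\alpha d^3+2\alpha\rho b^2d&3\alpha\rho bd^2\\ b^3&b^2d&bd^2&d^3\end{pmatrix}$, with $\alpha\in\{-1,1\}$ and $b,d\in\mathbb{F}_q$ not both $0$. For $q$ even, let $\eta\in\mathbb{F}_q$ have absolute trace $1$; the line $\ell_2$ through $P(\eta+1,1,1,0)$ and $P(\eta,\eta,0,1)$ is an imaginary chord, and every element of the subgroup of $G_q$ fixing $\ell_2$ has a matrix of the form $\begin{pmatrix}A^3&cA^2&c^2A&c^3\\ A^2B&dA^2&c^2B&c^2d\\ AB^2&cB^2&Ad^2&cd^2\\ B^3&dB^2&d^2B&d^3\end{pmatrix}$, where $A=\alpha c+d$, $B=\eta c+(\alpha+1)d$, $\alpha\in\{0,1\}$, and $c,d\in\mathbb{F}_q$ not both $0$.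
   Context: $\mathrm{PG}(3,q)$ has points $P(x_0,x_1,x_2,x_3)$. For $t\in\mathbb{F}_{q^2}$ let $P_t=P(t^3,t^2,t,1)$, and $P_\infty=P(1,0,0,0)$; the twisted cubic is $\mathcal{C}=\{P_t:t\in\mathbb{F}_q\cup\{\infty\}\}$. An imaginary chord is a line of $\mathrm{PG}(3,q)$ which, extended to $\mathrm{PG}(3,q^2)$, passes through $P_t$ and $P_{t^q}$ for some $t\in\mathbb{F}_{q^2}\setminus\mathbb{F}_q$. $G_q$ is the group of projectivities of $\mathrm{PG}(3,q)$ mapping $\mathcal{C}$ to itself; for $q\ge5$ its elements are the maps $x\mapsto xM$ on row coordinate vectors, with $M=\begin{pmatrix} a^3&a^2c&ac^2&c^3\\ 3a^2b&a^2d+2abc&bc^2+2acd&3c^2d\\ 3ab^2&b^2c+2abd&ad^2+2bcd&3cd^2\\ b^3&b^2d&bd^2&d^3\end{pmatrix}$, $a,b,c,d\in\mathbb{F}_q$, $ad-bc\neq0$, up to a nonzero scalar. For $q=2^h$, the absolute trace of $\eta$ is $\eta+\eta^2+\eta^{4}+\dots+\eta^{2^{h-1}}$. *)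

theory Defs
  imports "HOL-Analysis.Finite_Cartesian_Product"
begin

text \<open>Coordinates of PG(3,q): vectors in 'a^4 (indices 0,1,2,3 of the numeral type 4).
  Row vector x times matrix M is  x v* M.\<close>

definition idx4 :: "4 \<Rightarrow> nat" where
  "idx4 i = (if i = 0 then 0 else if i = 1 then 1 else if i = 2 then 2 else 3)"

definition vec4 :: "'a \<Rightarrow> 'a \<Rightarrow> 'a \<Rightarrow> 'a \<Rightarrow> 'a ^ 4" where
  "vec4 x0 x1 x2 x3 = (\<chi> i. [x0, x1, x2, x3] ! idx4 i)"

definition mat4 :: "'a list list \<Rightarrow> 'a ^ 4 ^ 4" where
  "mat4 rs = (\<chi> i j. rs ! idx4 i ! idx4 j)"

definition smat :: "'a::times \<Rightarrow> 'a ^ 4 ^ 4 \<Rightarrow> 'a ^ 4 ^ 4" where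
  "smat c M = (\<chi> i j. c * M $ i $ j)"

definition span2 :: "'a::field ^ 4 \<Rightarrow> 'a ^ 4 \<Rightarrow> ('a ^ 4) set" where
  "span2 u v = {a *s u + b *s v | a b. True}"

definition lin_indep2 :: "'a::field ^ 4 \<Rightarrow> 'a ^ 4 \<Rightarrow> bool" where
  "lin_indep2 u v \<longleftrightarrow> (\<forall>a b. a *s u + b *s v = 0 \<longrightarrow> a = 0 \<and> b = 0)"

definition is_line :: "('a::field ^ 4) set \<Rightarrow> bool" where
  "is_line L \<longleftrightarrow> (\<exists>u v. lin_indep2 u v \<and> L = span2 u v)"

text \<open>Extension of a line of PG(3,q) to PG(3,q^2), the field F_{q^2} being a field 'b
  of size q^2 into which F_q = 'a is embedded by emb.\<close>
definition ext_line :: "('a \<Rightarrow> 'b::field) \<Rightarrow> ('a ^ 4) set \<Rightarrow> ('b ^ 4) set" where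
  "ext_line emb L = {a *s (\<chi> i. emb (u $ i)) + b *s (\<chi> i. emb (v $ i)) | a b u v. u \<in> L \<and> v \<in> L}"

definition Pt :: "'b::field \<Rightarrow> 'b ^ 4" where
  "Pt t = vec4 (t ^ 3) (t ^ 2) t 1"

definition imaginary_chord :: "('a::{finite,field} \<Rightarrow> 'b::field) \<Rightarrow> ('a ^ 4) set \<Rightarrow> bool" where
  "imaginary_chord emb L \<longleftrightarrow> is_line L \<and>
     (\<exists>t. t \<notin> range emb \<and> Pt t \<in> ext_line emb L \<and> Pt (t ^ CARD('a)) \<in> ext_line emb L)"

definition Mabcd :: "'a::field \<Rightarrow> 'a \<Rightarrow> 'a \<Rightarrow> 'a \<Rightarrow> 'a ^ 4 ^ 4" where
  "Mabcd a b c d = mat4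
    [[a^3, a^2*c, a*c^2, c^3],
     [3*a^2*b, a^2*d + 2*a*b*c, b*c^2 + 2*a*c*d, 3*c^2*d],
     [3*a*b^2, b^2*c + 2*a*b*d, a*d^2 + 2*b*c*d, 3*c*d^2],
     [b^3, b^2*d, b*d^2, d^3]]"

text \<open>A projectivity is represented by the class of its matrices modulo nonzero scalars.\<close>
definition proj_class :: "'a::field ^ 4 ^ 4 \<Rightarrow> ('a ^ 4 ^ 4) set" where
  "proj_class M = {smat c M | c. c \<noteq> 0}"

definition Gq :: "('a::{finite,field} ^ 4 ^ 4) set set" where
  "Gq = {proj_class (Mabcd a b c d) | a b c d. a * d - b * c \<noteq> 0}"

definition act_line :: "'a::field ^ 4 ^ 4 \<Rightarrow> ('a ^ 4) set \<Rightarrow> ('a ^ 4) set" where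
  "act_line M L = (\<lambda>x. x v* M) ` L"

definition stabiliser :: "('a::{finite,field} ^ 4) set \<Rightarrow> ('a ^ 4 ^ 4) set set" where
  "stabiliser L = {g \<in> Gq. \<forall>M\<in>g. act_line M L = L}"

definition orbit :: "('a::{finite,field} ^ 4) set \<Rightarrow> ('a ^ 4) set set" where
  "orbit L = {act_line M L | M g. g \<in> Gq \<and> M \<in> g}"

definition abs_trace :: "nat \<Rightarrow> 'a::field \<Rightarrow> 'a" where
  "abs_trace h \<eta> = (\<Sum>i<h. \<eta> ^ (2 ^ i))"

definition M_odd :: "'a::field \<Rightarrow> 'a \<Rightarrow> 'a \<Rightarrow> 'a \<Rightarrow> 'a ^ 4 ^ 4" where
  "M_odd \<rho> \<alpha> b d = mat4
    [[\<alpha>*d^3, \<alpha>*\<rho>*b*d^2, \<alpha>*\<rho>^2*b^2*d, \<alpha>*\<rho>^3*b^3],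
     [3*b*d^2, d^3 + 2*\<rho>*b^2*d, \<rho>^2*b^3 + 2*\<rho>*b*d^2, 3*\<rho>^2*b^2*d],
     [3*\<alpha>*b^2*d, \<alpha>*\<rho>*b^3 + 2*\<alpha>*b*d^2, \<alpha>*d^3 + 2*\<alpha>*\<rho>*b^2*d, 3*\<alpha>*\<rho>*b*d^2],
     [b^3, b^2*d, b*d^2, d^3]]"

definition M_even :: "'a::field \<Rightarrow> 'a \<Rightarrow> 'a \<Rightarrow> 'a \<Rightarrow> 'a ^ 4 ^ 4" where
  "M_even \<eta> \<alpha> c d = (let A = \<alpha>*c + d; B = \<eta>*c + (\<alpha>+1)*d in mat4
    [[A^3, c*A^2, c^2*A, c^3],
     [A^2*B, d*A^2, c^2*B, c^2*d],
     [A*B^2, c*B^2, A*d^2, c*d^2],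
     [B^3, d*B^2, d^2*B, d^3]])"

end

theory Submission
  imports Defs "HOL-Analysis.Cartesian_Space" "HOL-Computational_Algebra.Polynomial" "HOL-Computational_Algebra.Primes"
begin

lemma pow_card_ff:
  fixes x :: "'c::{finite,field}"
  shows "x ^ CARD('c) = x"
proof (cases "x = 0")
  case False
  have "x * (\<Prod>y\<in>UNIV-{0}. x * y) = x * x ^ (card (UNIV :: 'c set) - 1) * \<Prod>(UNIV-{0})"
    by (simp add: prod.distrib mult_ac)
  also have "x * x ^ (card (UNIV :: 'c set) - 1) = x ^ Suc (card (UNIV :: 'c set) - 1)"
    by (subst power_Suc) auto
  also have "Suc (card (UNIV :: 'c set) - 1) = card (UNIV :: 'c set)"
    using finite_UNIV_card_ge_0[where ?'a = 'c] by simp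
  also have "(\<Prod>y\<in>UNIV-{0}. x * y) = (\<Prod>y\<in>UNIV-{0}. y)"
    by (rule prod.reindex_bij_witness[of _ "\<lambda>y. y / x" "\<lambda>y. x * y"]) (use False in auto)
  finally show ?thesis
    by simp
qed (use finite_UNIV_card_ge_0[where ?'a = 'c] in auto)

lemma prime_CHAR_ff: "prime CHAR('c::{finite,field})"
  by (rule prime_CHAR_semidom) (rule finite_imp_CHAR_pos, simp)

lemma of_nat_mod_CHAR': "(of_nat (n mod CHAR('c)) :: 'c::ring_1) = of_nat n"
proof -
  have "(of_nat n :: 'c) = of_nat (n mod CHAR('c) + CHAR('c) * (n div CHAR('c)))" by simp
  also have "\<dots> = of_nat (n mod CHAR('c))" by (simp only: of_nat_add of_nat_mult of_nat_CHAR) simp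
  finally show ?thesis by simp
qed

definition spn :: "'c::field set \<Rightarrow> 'c set" where
  "spn S = {(\<Sum>s\<in>S. of_nat (f s) * s) | f. True}"

lemma spn_empty: "spn {} = {0}" by (auto simp: spn_def)

lemma spn_insert:
  assumes "finite S" "x \<notin> S"
  shows "spn (insert x S) = {y + of_nat c * x | y c. y \<in> spn S}"
proof
  show "spn (insert x S) \<subseteq> {y + of_nat c * x | y c. y \<in> spn S}"
  proof
    fix z assume "z \<in> spn (insert x S)"
    then obtain f where z: "z = (\<Sum>s\<in>insert x S. of_nat (f s) * s)" by (auto simp: spn_def)
    then have "z = (\<Sum>s\<in>S. of_nat (f s) * s) + of_nat (f x) * x" using assms by (simp add: add.commute)
    moreover have "(\<Sum>s\<in>S. of_nat (f s) * s) \<in> spn S" by (auto simp: spn_def)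
    ultimately show "z \<in> {y + of_nat c * x | y c. y \<in> spn S}" by blast
  qed
next
  show "{y + of_nat c * x | y c. y \<in> spn S} \<subseteq> spn (insert x S)"
  proof
    fix z assume "z \<in> {y + of_nat c * x | y c. y \<in> spn S}"
    then obtain f c where z: "z = (\<Sum>s\<in>S. of_nat (f s) * s) + of_nat c * x" by (auto simp: spn_def)
    define g where "g = f(x := c)"
    have "(\<Sum>s\<in>S. of_nat (f s) * s) = (\<Sum>s\<in>S. of_nat (g s) * s)"
      using assms by (intro sum.cong) (auto simp: g_def)
    then have "z = (\<Sum>s\<in>insert x S. of_nat (g s) * s)" using assms z by (simp add: g_def add.commute)
    then show "z \<in> spn (insert x S)" by (auto simp: spn_def)
  qed
qed

lemma spn_add: "y \<in> spn S \<Longrightarrow> z \<in> spn S \<Longrightarrow> y + z \<in> spn S"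
proof -
  assume "y \<in> spn S" "z \<in> spn S"
  then obtain f g where "y = (\<Sum>s\<in>S. of_nat (f s) * s)" "z = (\<Sum>s\<in>S. of_nat (g s) * s)"
    by (auto simp: spn_def)
  then have "y + z = (\<Sum>s\<in>S. of_nat ((\<lambda>s. f s + g s) s) * s)" by (simp add: sum.distrib distrib_right)
  then show ?thesis unfolding spn_def by (intro CollectI exI[of _ "\<lambda>s. f s + g s"]) simp
qed

lemma spn_mult: "y \<in> spn S \<Longrightarrow> of_nat c * y \<in> spn S"
proof -
  assume "y \<in> spn S"
  then obtain f where "y = (\<Sum>s\<in>S. of_nat (f s) * s)" by (auto simp: spn_def)
  then have "of_nat c * y = (\<Sum>s\<in>S. of_nat ((\<lambda>s. c * f s) s) * s)" by (simp add: sum_distrib_left mult.assoc)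
  then show ?thesis unfolding spn_def by (intro CollectI exI[of _ "\<lambda>s. c * f s"]) simp
qed

lemma spn_zero: "0 \<in> spn S"
  using spn_mult[of _ S 0] by (auto simp: spn_def)

lemma spn_neg:
  assumes "y \<in> spn S"
  shows "- y \<in> spn (S::'c::{finite,field} set)"
proof -
  have p: "CHAR('c) > 0" using prime_CHAR_ff[where 'c='c] prime_gt_0_nat by blast
  have "(of_nat (CHAR('c) - 1) :: 'c) = of_nat CHAR('c) - 1" using p by (simp add: of_nat_diff)
  then have "(of_nat (CHAR('c) - 1) :: 'c) * y = - y" by simp
  then show ?thesis using spn_mult[OF assms] by metis
qed

lemma card_spn:
  fixes S :: "'c::{finite,field} set"
  shows "\<exists>k. card (spn S) = CHAR('c) ^ k"
proof -
  have "finite S" by simp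
  then show ?thesis
  proof (induction S rule: finite_induct)
    case empty
    then show ?case by (auto simp: spn_empty intro: exI[of _ 0])
  next
    case (insert x S)
    then obtain k where k: "card (spn S) = CHAR('c) ^ k" by blast
    let ?p = "CHAR('c)"
    have p: "prime ?p" by (rule prime_CHAR_ff)
    show ?case
    proof (cases "x \<in> spn S")
      case True
      have "spn (insert x S) = spn S"
        unfolding spn_insert[OF insert(1,2)]
      proof
        show "{y + of_nat c * x |y c. y \<in> spn S} \<subseteq> spn S"
          using True spn_add spn_mult by blast
        show "spn S \<subseteq> {y + of_nat c * x |y c. y \<in> spn S}"
          by (force intro: exI[of _ 0])
      qed
      then show ?thesis using k by auto
    next
      case False
      have eq: "spn (insert x S) = (\<lambda>(y,c). y + of_nat c * x) ` (spn S \<times> {..<?p})"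
        unfolding spn_insert[OF insert(1,2)]
      proof
        show "{y + of_nat c * x |y c. y \<in> spn S} \<subseteq> (\<lambda>(y, c). y + of_nat c * x) ` (spn S \<times> {..<?p})"
        proof
          fix z assume "z \<in> {y + of_nat c * x |y c. y \<in> spn S}"
          then obtain y c where "z = y + of_nat c * x" "y \<in> spn S" by auto
          moreover have "c mod ?p < ?p" using p prime_gt_0_nat by auto
          moreover have "(of_nat (c mod ?p) :: 'c) = of_nat c" by (rule of_nat_mod_CHAR')
          ultimately show "z \<in> (\<lambda>(y, c). y + of_nat c * x) ` (spn S \<times> {..<?p})"
            by (auto intro!: image_eqI[of _ _ "(y, c mod ?p)"])
        qed
      qed auto
      have inj: "inj_on (\<lambda>(y,c). y + of_nat c * x) (spn S \<times> {..<?p})"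
      proof (rule inj_onI, clarify)
        fix y c y' c'
        assume y: "y \<in> spn S" "c < ?p" "y' \<in> spn S" "c' < ?p"
          and e: "y + of_nat c * x = y' + of_nat c' * (x::'c)"
        have cc: "c = c'"
        proof (rule ccontr)
          assume ne: "c \<noteq> c'"
          {
            fix a b y1 y2 assume ab: "a < b" "b < ?p" "y1 \<in> spn S" "y2 \<in> spn S"
              "y1 + of_nat a * x = y2 + of_nat b * (x::'c)"
            have "of_nat (b - a) * x = y1 + - y2"
              using ab by (simp add: of_nat_diff algebra_simps)
            then have mem: "of_nat (b - a) * x \<in> spn S" using ab spn_add spn_neg by metis
            have nd: "\<not> ?p dvd (b - a)"
            proof
              assume "?p dvd (b - a)"
              then have "?p \<le> b - a" using ab by (intro dvd_imp_le) auto
              then show False using ab by linarith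
            qed
            define z where "z = (of_nat (b - a) :: 'c)"
            have z0: "z \<noteq> 0" unfolding z_def using nd of_nat_eq_0_iff_char_dvd by blast
            have "card {0, 1::'c} \<le> CARD('c)" by (rule card_mono) auto
            then have q2: "CARD('c) \<ge> 2" by simp
            have "z ^ (CARD('c) - 2) * z * z = z ^ CARD('c)"
            proof -
              have "CARD('c) = Suc (Suc (CARD('c) - 2))" using q2 by simp
              then show ?thesis by (metis power_Suc2)
            qed
            also have "\<dots> = z" by (rule pow_card_ff)
            finally have zz: "z ^ (CARD('c) - 2) * z = 1" using z0
              by (metis mult_cancel_right2)
            have "of_nat ((b - a) ^ (CARD('c) - 2)) * (of_nat (b - a) * x) = x"
              using zz unfolding z_def of_nat_power by (metis mult.assoc mult_1)
            then have "x \<in> spn S" using spn_mult[OF mem, of "(b - a) ^ (CARD('c) - 2)"] by metis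
          }
          then show False using ne y e False
            by (metis linorder_neqE_nat)
        qed
        then show "y = y' \<and> c = c'" using e by simp
      qed
      have "card (spn (insert x S)) = card (spn S) * ?p"
        unfolding eq by (subst card_image[OF inj]) (simp add: card_cartesian_product)
      then show ?thesis using k by (auto intro: exI[of _ "Suc k"])
    qed
  qed
qed

lemma spn_UNIV: "spn (UNIV::'c::{finite,field} set) = UNIV"
proof -
  { fix x :: 'c
    have "(\<Sum>s\<in>UNIV. of_nat (if s = x then 1 else 0) * s) = (\<Sum>s\<in>UNIV. if s = x then s else 0)"
      by (intro sum.cong) auto
    also have "\<dots> = x" by simp
    finally have "(\<Sum>s\<in>UNIV. of_nat (if s = x then 1 else 0) * s) = x" .
    then have "x \<in> spn UNIV" unfolding spn_def by (intro CollectI exI[of _ "\<lambda>s. if s = x then 1 else 0"]) simp }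
  then show ?thesis by auto
qed

lemma card_prime_power: "\<exists>k. CARD('c::{finite,field}) = CHAR('c) ^ k"
  using card_spn[of "UNIV::'c set"] spn_UNIV by metis

locale sett =
  fixes emb :: "'a::{finite,field} \<Rightarrow> 'b::{finite,field}"
  assumes ext_card: "CARD('b) = CARD('a) ^ 2"
    and emb_inj: "inj emb"
    and emb_add: "\<And>x y. emb (x + y) = emb x + emb y"
    and emb_mult: "\<And>x y. emb (x * y) = emb x * emb y"
    and emb_one: "emb 1 = 1"
begin

lemma emb_zero[simp]: "emb 0 = 0"
proof -
  have "emb 0 + emb 0 = emb 0" using emb_add[of 0 0] by simp
  then show ?thesis by (metis add_cancel_left_right)
qed

lemma emb_neg[simp]: "emb (- x) = - emb x"
proof -
  have "emb (- x) + emb x = 0" using emb_add[of "-x" x] by simp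
  then show ?thesis by (simp add: eq_neg_iff_add_eq_0)
qed

lemma emb_diff[simp]: "emb (x - y) = emb x - emb y"
  using emb_add[of x "-y"] by simp

lemma emb_pow[simp]: "emb (x ^ n) = emb x ^ n"
  by (induction n) (simp_all add: emb_one emb_mult)

lemma emb_of_nat[simp]: "emb (of_nat n) = of_nat n"
  by (induction n) (simp_all add: emb_one emb_add)

lemma emb_numeral[simp]: "emb (numeral n) = numeral n"
  using emb_of_nat[of "numeral n"] by simp

lemma emb_eq_iff[simp]: "emb x = emb y \<longleftrightarrow> x = y"
  using emb_inj by (auto dest: injD)

lemma emb_eq0_iff[simp]: "emb x = 0 \<longleftrightarrow> x = 0"
  using emb_eq_iff[of x 0] by simp

lemma emb_inverse[simp]: "emb (inverse x) = inverse (emb x)"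
proof (cases "x = 0")
  case False
  have "emb (inverse x) * emb x = 1" using emb_mult[of "inverse x" x] False by (simp add: emb_one)
  then show ?thesis using False by (simp add: field_simps)
qed simp

lemma emb_divide[simp]: "emb (x / y) = emb x / emb y"
  by (simp add: divide_inverse emb_mult)

lemmas emb_hom[simp] = emb_add emb_mult emb_one

lemma CHAR_eq: "CHAR('b) = CHAR('a)"
proof -
  have "(of_nat n :: 'b) = 0 \<longleftrightarrow> (of_nat n :: 'a) = 0" for n
    using emb_eq0_iff[of "of_nat n :: 'a"] by simp
  then have "\<And>n. CHAR('b) dvd n \<longleftrightarrow> CHAR('a) dvd n"
    by (simp add: of_nat_eq_0_iff_char_dvd[symmetric])
  then show ?thesis by (meson dvd_antisym dvd_refl)
qed

definition F :: "'b \<Rightarrow> 'b" where "F x = x ^ CARD('a)"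

lemma F_add: "F (x + y) = F x + F y"
proof -
  obtain k where k: "CARD('a) = CHAR('a) ^ k" using card_prime_power by blast
  show ?thesis unfolding F_def
    by (rule freshmans_dream') (use prime_CHAR_ff[where 'c='b] k CHAR_eq in auto)
qed

lemma F_mult: "F (x * y) = F x * F y"
  by (simp add: F_def power_mult_distrib)

lemma F_one[simp]: "F 1 = 1" by (simp add: F_def)
lemma F_zero[simp]: "F 0 = 0" by (simp add: F_def)

lemma F_neg: "F (- x) = - F x"
  using F_add[of "-x" x] by (simp add: eq_neg_iff_add_eq_0)

lemma F_diff: "F (x - y) = F x - F y"
  using F_add[of x "-y"] F_neg by simp

lemma F_pow: "F (x ^ n) = F x ^ n"
  by (simp add: F_def power_mult[symmetric] mult.commute)

lemma F_inverse: "F (inverse x) = inverse (F x)"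
  by (simp add: F_def power_inverse)

lemma F_divide: "F (x / y) = F x / F y"
  by (simp add: divide_inverse F_mult F_inverse)

lemma F_emb[simp]: "F (emb x) = emb x"
  by (simp add: F_def pow_card_ff emb_pow[symmetric] del: emb_pow)

lemma F_F[simp]: "F (F x) = x"
proof -
  have "F (F x) = x ^ (CARD('a) * CARD('a))" by (simp add: F_def power_mult)
  also have "CARD('a) * CARD('a) = CARD('b)" using ext_card by (simp add: power2_eq_square)
  finally show ?thesis by (simp add: pow_card_ff)
qed

lemmas F_hom = F_add F_mult F_neg F_diff F_pow F_divide F_inverse

lemma card_range_emb: "card (range emb) = CARD('a)"
  using emb_inj by (simp add: card_image)

lemma CARD_a_ge2: "CARD('a) \<ge> 2"
proof -
  have "card {0, 1::'a} \<le> CARD('a)" by (rule card_mono) auto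
  then show ?thesis by simp
qed

lemma F_fix: "F x = x \<longleftrightarrow> x \<in> range emb"
proof
  assume "x \<in> range emb" then show "F x = x" by auto
next
  assume Fx: "F x = x"
  define p :: "'b poly" where "p = monom 1 CARD('a) + [:0, -1:]"
  have dp: "degree p = CARD('a)" using CARD_a_ge2 unfolding p_def
    by (subst degree_add_eq_left) (auto simp: degree_monom_eq)
  have p0: "p \<noteq> 0" using dp CARD_a_ge2 by auto
  have pe: "poly p y = 0 \<longleftrightarrow> F y = y" for y
    by (simp add: p_def F_def poly_monom)
  have sub: "range emb \<subseteq> {y. poly p y = 0}"
  proof
    fix y assume "y \<in> range emb"
    then obtain z where "y = emb z" by blast
    then have "F y = y" by simp
    then show "y \<in> {y. poly p y = 0}" using pe by blast
  qed
  have "card {y. poly p y = 0} \<le> card (range emb)"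
    using card_poly_roots_bound[OF p0] dp card_range_emb by simp
  then have "range emb = {y. poly p y = 0}"
    using sub by (intro card_seteq) auto
  then show "x \<in> range emb" using pe Fx by blast
qed

lemma decomp_unique:
  assumes t: "t \<notin> range emb" and e: "emb a + emb b * t = emb a' + emb b' * t"
  shows "a = a' \<and> b = b'"
proof (cases "b = b'")
  case True then show ?thesis using e by simp
next
  case False
  then have "t = emb ((a - a') / (b' - b))" using e
    by (simp add: field_simps)
  then show ?thesis using t by (metis rangeI)
qed

lemma decomp:
  assumes t: "t \<notin> range emb"
  shows "\<exists>a b. y = emb a + emb b * t"
proof -
  let ?G = "\<lambda>(a,b). emb a + emb b * t"
  have inj: "inj ?G" using decomp_unique[OF t] by (auto intro!: injI)
  have "card (range ?G) = CARD('a \<times> 'a)" using inj by (simp add: card_image)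
  also have "\<dots> = CARD('b)" using ext_card by (simp add: power2_eq_square)
  finally have "range ?G = UNIV" by (intro card_seteq) auto
  then obtain ab where "y = ?G ab" by (metis UNIV_I imageE)
  then show ?thesis by (cases ab) auto
qed

lemma quad: "t \<notin> range emb \<Longrightarrow> \<exists>u v. t ^ 2 = emb u * t + emb v"
  using decomp[of t "t^2"] by (auto simp: add.commute)

lemma F_conj:
  assumes t: "t \<notin> range emb" and q: "t ^ 2 = emb u * t + emb v"
  shows "F t = emb u - t"
proof -
  have ne: "F t \<noteq> t" using F_fix t by auto
  have "F t ^ 2 = emb u * F t + emb v" using arg_cong[OF q, of F]
    by (simp add: F_hom)
  then have "(F t - t) * (F t + t - emb u) = 0" using q by (simp add: algebra_simps power2_eq_square)
  then have "F t + t - emb u = 0" using ne by simp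
  then show ?thesis by (simp add: algebra_simps)
qed

lemma F_notin: "t \<notin> range emb \<Longrightarrow> F t \<notin> range emb"
  using F_fix F_F by metis

lemma roots2:
  assumes t: "t \<notin> range emb" and q: "t ^ 2 = emb u * t + emb v"
    and s: "s ^ 2 = emb u * s + emb v"
  shows "s = t \<or> s = F t"
proof -
  have "(s - t) * (s - F t) = s^2 - emb u * s - (t^2 - emb u * t)" unfolding F_conj[OF t q]
    by (simp add: algebra_simps power2_eq_square)
  also have "\<dots> = 0" using q s by simp
  finally have "(s - t) * (s - F t) = 0" .
  then show ?thesis by simp
qed

lemma irr:
  assumes t: "t \<notin> range emb" and q: "t ^ 2 = emb u * t + emb v"
  shows "x ^ 2 \<noteq> u * x + v"
proof
  assume "x ^ 2 = u * x + v"
  then have "emb (x ^ 2) = emb (u * x + v)" by simp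
  then have "emb x ^ 2 = emb u * emb x + emb v" by (simp del: emb_pow add: emb_pow[symmetric])
  then have "emb x = t \<or> emb x = F t" using roots2[OF t q] by blast
  then show False using t F_notin[OF t] by (metis rangeI)
qed

lemma exists_notin: "\<exists>t. t \<notin> range emb"
proof (rule ccontr)
  assume "\<not> ?thesis"
  then have "range emb = UNIV" by auto
  then have "CARD('b) = CARD('a)" using card_range_emb by simp
  then have e: "CARD('a) * CARD('a) = CARD('a)" using ext_card by (simp add: power2_eq_square)
  have "2 * CARD('a) \<le> CARD('a) * CARD('a)" using CARD_a_ge2 by (intro mult_right_mono) auto
  then show False using e CARD_a_ge2 by linarith
qed

end

lemma four_cases: "(i::4) = 0 \<or> i = 1 \<or> i = 2 \<or> i = 3"
  using exhaust_4[of i] by auto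

lemma UNIV4: "(UNIV::4 set) = {0,1,2,3}" using four_cases by auto

lemma sum4: "sum f (UNIV::4 set) = f 0 + f 1 + f 2 + f 3"
  unfolding UNIV4 by (simp add: ac_simps)

lemma idx4_simps[simp]: "idx4 0 = 0" "idx4 1 = 1" "idx4 2 = 2" "idx4 3 = 3"
  by (simp_all add: idx4_def)

lemma vec4_nth[simp]: "vec4 a b c d $ 0 = a" "vec4 a b c d $ 1 = b" "vec4 a b c d $ 2 = c" "vec4 a b c d $ 3 = d"
  by (simp_all add: vec4_def)

lemma vec4_eq_iff: "(x::'a^4) = y \<longleftrightarrow> x$0 = y$0 \<and> x$1 = y$1 \<and> x$2 = y$2 \<and> x$3 = y$3"
proof
  assume h: "x$0 = y$0 \<and> x$1 = y$1 \<and> x$2 = y$2 \<and> x$3 = y$3"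
  show "x = y" unfolding vec_eq_iff
  proof
    fix i :: 4
    show "x$i = y$i" using four_cases[of i] h by auto
  qed
qed simp

lemma vec4_eta: "(x::'a^4) = vec4 (x$0) (x$1) (x$2) (x$3)"
  by (simp add: vec4_eq_iff)

lemma mat4_nth[simp]: "mat4 rs $ i $ j = rs ! idx4 i ! idx4 j"
  by (simp add: mat4_def)

lemma vm4: "((x::'a::semiring_1^4) v* M) $ j = x$0 * M$0$j + x$1 * M$1$j + x$2 * M$2$j + x$3 * M$3$j"
  by (simp add: vector_matrix_mult_def sum4 mult.commute)

lemma vm_lin: "((a::'a::comm_ring_1) *s x + b *s y) v* M = a *s (x v* M) + b *s (y v* M)"
  by (simp add: vec_eq_iff vector_matrix_mult_def sum_distrib_left sum.distrib algebra_simps)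

lemma vm_zero: "(0::'a::comm_ring_1^'n) v* M = 0"
  by (simp add: vec_eq_iff vector_matrix_mult_def)

lemma span2_sub:
  fixes u v :: "'c::field ^ 4"
  assumes "u' \<in> span2 u v" "v' \<in> span2 u v"
  shows "span2 u' v' \<subseteq> span2 u v"
proof
  fix x assume "x \<in> span2 u' v'"
  then obtain al be where x: "x = al *s u' + be *s v'" by (auto simp: span2_def)
  obtain a b where u': "u' = a *s u + b *s v" using assms by (auto simp: span2_def)
  obtain c d where v': "v' = c *s u + d *s v" using assms by (auto simp: span2_def)
  have "x = (al * a + be * c) *s u + (al * b + be * d) *s v"
    unfolding x u' v' by (simp add: vec_eq_iff algebra_simps)
  then show "x \<in> span2 u v" by (auto simp: span2_def)
qed

lemma span2_I: "a *s u + b *s v \<in> span2 u v"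
  unfolding span2_def by blast

lemma span2_mem1: "u \<in> span2 u v"
  unfolding span2_def by (rule CollectI, rule exI[of _ 1], rule exI[of _ 0]) simp
lemma span2_mem2: "v \<in> span2 u v"
  unfolding span2_def by (rule CollectI, rule exI[of _ 0], rule exI[of _ 1]) simp

lemma span2_lin: "x \<in> span2 u v \<Longrightarrow> y \<in> span2 u v \<Longrightarrow> a *s x + b *s y \<in> span2 (u::'c::field^4) v"
proof -
  assume "x \<in> span2 u v" "y \<in> span2 u v"
  then have "span2 x y \<subseteq> span2 u v" by (rule span2_sub)
  moreover have "a *s x + b *s y \<in> span2 x y" by (auto simp: span2_def)
  ultimately show ?thesis by blast
qed

lemma sc1: "(a*d - b*c::'c::field) \<noteq> 0 \<Longrightarrow> (d / (a*d - b*c)) * (a * x + b * y) + (- b / (a*d - b*c)) * (c * x + d * y) = x"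
  by (simp add: divide_simps) (simp add: algebra_simps)
lemma sc2: "(a*d - b*c::'c::field) \<noteq> 0 \<Longrightarrow> (- c / (a*d - b*c)) * (a * x + b * y) + (a / (a*d - b*c)) * (c * x + d * y) = y"
  by (simp add: divide_simps) (simp add: algebra_simps)

lemma line_eq:
  fixes u v :: "'c::field ^ 4"
  assumes i: "lin_indep2 u v" and i': "lin_indep2 u' v'"
    and m: "u' \<in> span2 u v" "v' \<in> span2 u v"
  shows "span2 u' v' = span2 u v"
proof
  show "span2 u' v' \<subseteq> span2 u v" using m by (rule span2_sub)
  obtain a b where u': "u' = a *s u + b *s v" using m by (auto simp: span2_def)
  obtain c d where v': "v' = c *s u + d *s v" using m by (auto simp: span2_def)
  have D: "a * d - b * c \<noteq> 0"
  proof
    assume D0: "a * d - b * c = 0"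
    have "d *s u' + (- b) *s v' = (a * d - b * c) *s u"
      unfolding u' v' by (simp add: vec_eq_iff algebra_simps)
    then have "d *s u' + (- b) *s v' = 0" using D0 by simp
    then have "d = 0 \<and> - b = 0" using i' unfolding lin_indep2_def by blast
    then have db: "d = 0 \<and> b = 0" by simp
    have "c *s u' + (- a) *s v' = (b * c - a * d) *s v"
      unfolding u' v' by (simp add: vec_eq_iff algebra_simps)
    then have "c *s u' + (- a) *s v' = 0" using D0 by (simp add: algebra_simps)
    then have "c = 0 \<and> - a = 0" using i' unfolding lin_indep2_def by blast
    then have ca: "c = 0 \<and> a = 0" by simp
    have "1 *s u' + 0 *s v' = 0" using u' db ca by simp
    then have "(1::'c) = 0 \<and> (0::'c) = 0" using i' unfolding lin_indep2_def by blast
    then show False by simp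
  qed
  let ?D = "a * d - b * c"
  have ue: "u = (d / ?D) *s u' + (- b / ?D) *s v'"
    unfolding u' v' vec_eq_iff vector_add_component vector_smult_component by (simp only: sc1[OF D] refl simp_thms)
  have ve: "v = (- c / ?D) *s u' + (a / ?D) *s v'"
    unfolding u' v' vec_eq_iff vector_add_component vector_smult_component by (simp only: sc2[OF D] refl simp_thms)
  have "u \<in> span2 u' v'" by (subst ue, rule span2_I)
  moreover have "v \<in> span2 u' v'" by (subst ve, rule span2_I)
  ultimately show "span2 u v \<subseteq> span2 u' v'" by (rule span2_sub)
qed

definition X0 :: "'a::field \<Rightarrow> 'a \<Rightarrow> 'a^4" where "X0 u v = vec4 (u^2 + v) u 1 0"
definition Y0 :: "'a::field \<Rightarrow> 'a \<Rightarrow> 'a^4" where "Y0 u v = vec4 (u * v) v 0 1"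

lemma indep_XY: "lin_indep2 (X0 u v) (Y0 u v)"
  unfolding lin_indep2_def
proof (intro allI impI)
  fix a b assume h: "a *s X0 u v + b *s Y0 u v = 0"
  have "(a *s X0 u v + b *s Y0 u v) $ 2 = 0" "(a *s X0 u v + b *s Y0 u v) $ 3 = 0" using h by simp_all
  then show "a = 0 \<and> b = 0" by (simp add: X0_def Y0_def)
qed

context sett
begin

definition embv :: "'a^4 \<Rightarrow> 'b^4" where "embv x = (\<chi> i. emb (x $ i))"

lemma embv_nth[simp]: "embv x $ i = emb (x $ i)" by (simp add: embv_def)

lemma embv_lin: "embv (a *s x + b *s y) = emb a *s embv x + emb b *s embv y"
  by (simp add: vec_eq_iff)

lemma embv_inj: "embv x = embv y \<Longrightarrow> x = y"
  by (simp add: vec_eq_iff)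

lemma ext_line_embv: "ext_line emb L = {a *s embv u + b *s embv v | a b u v. u \<in> L \<and> v \<in> L}"
  unfolding ext_line_def embv_def by simp

definition Rl :: "'b \<Rightarrow> ('a^4) set" where
  "Rl t = {x. \<exists>al be. embv x = al *s Pt t + be *s Pt (F t)}"

lemma Pt_expand:
  assumes q: "t ^ 2 = emb u * t + emb v"
  shows "Pt t = t *s embv (X0 u v) + embv (Y0 u v)"
proof -
  have t3: "t ^ 3 = t * (emb u ^ 2 + emb v) + emb u * emb v"
  proof -
    have "t ^ 3 = t * t ^ 2" by (simp add: power_numeral_reduce)
    also have "\<dots> = t * (emb u * t + emb v)" by (simp only: q)
    also have "\<dots> = emb u * t ^ 2 + emb v * t" by (simp add: algebra_simps power2_eq_square)
    also have "\<dots> = emb u * (emb u * t + emb v) + emb v * t" by (simp only: q)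
    also have "\<dots> = t * (emb u ^ 2 + emb v) + emb u * emb v" by (simp add: algebra_simps power2_eq_square)
    finally show ?thesis .
  qed
  show ?thesis unfolding Pt_def using q t3 by (simp add: vec4_eq_iff X0_def Y0_def)
qed

lemma Ft_quad:
  assumes t: "t \<notin> range emb" and q: "t ^ 2 = emb u * t + emb v"
  shows "F t ^ 2 = emb u * F t + emb v"
  using arg_cong[OF q, of F] by (simp add: F_hom)

lemma Rl_eq:
  assumes t: "t \<notin> range emb" and q: "t ^ 2 = emb u * t + emb v"
  shows "Rl t = span2 (X0 u v) (Y0 u v)"
proof
  have qF: "F t ^ 2 = emb u * F t + emb v" by (rule Ft_quad[OF t q])
  have ne: "t - F t \<noteq> 0" using F_fix[of t] t by (metis eq_iff_diff_eq_0)
  let ?X = "embv (X0 u v)" and ?Y = "embv (Y0 u v)"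
  have comb: "al *s Pt t + be *s Pt (F t) = (al * t + be * F t) *s ?X + (al + be) *s ?Y" for al be
    unfolding Pt_expand[OF q] Pt_expand[OF qF] by (simp add: vec_eq_iff algebra_simps)
  show "Rl t \<subseteq> span2 (X0 u v) (Y0 u v)"
  proof
    fix x assume "x \<in> Rl t"
    then obtain al be where e: "embv x = al *s Pt t + be *s Pt (F t)" by (auto simp: Rl_def)
    have e2: "embv x = (al * t + be * F t) *s ?X + (al + be) *s ?Y" using e comb by simp
    have c2: "emb (x$2) = al * t + be * F t" using arg_cong[OF e2, of "\<lambda>z. z $ 2"] by (simp add: X0_def Y0_def)
    have c3: "emb (x$3) = al + be" using arg_cong[OF e2, of "\<lambda>z. z $ 3"] by (simp add: X0_def Y0_def)
    have "embv x = embv (x$2 *s X0 u v + x$3 *s Y0 u v)" unfolding embv_lin e2 c2 c3 ..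
    then have "x = x$2 *s X0 u v + x$3 *s Y0 u v" by (rule embv_inj)
    then show "x \<in> span2 (X0 u v) (Y0 u v)" by (metis span2_I)
  qed
  show "span2 (X0 u v) (Y0 u v) \<subseteq> Rl t"
  proof
    fix x assume "x \<in> span2 (X0 u v) (Y0 u v)"
    then obtain a b where x: "x = a *s X0 u v + b *s Y0 u v" by (auto simp: span2_def)
    define al where "al = (emb a - emb b * F t) / (t - F t)"
    define be where "be = emb b - al"
    have c0: "al * (t - F t) = emb a - emb b * F t" using ne by (simp add: al_def)
    have "al * t + be * F t = al * (t - F t) + emb b * F t" by (simp add: be_def algebra_simps)
    then have c1: "al * t + be * F t = emb a" using c0 by simp
    have c2: "al + be = emb b" by (simp add: be_def)
    have "embv x = al *s Pt t + be *s Pt (F t)" unfolding comb c1 c2 x embv_lin ..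
    then show "x \<in> Rl t" by (auto simp: Rl_def)
  qed
qed

lemma X0_Rl: "t \<notin> range emb \<Longrightarrow> t ^ 2 = emb u * t + emb v \<Longrightarrow> X0 u v \<in> Rl t"
  using Rl_eq span2_mem1 by metis
lemma Y0_Rl: "t \<notin> range emb \<Longrightarrow> t ^ 2 = emb u * t + emb v \<Longrightarrow> Y0 u v \<in> Rl t"
  using Rl_eq span2_mem2 by metis

lemma Rl_line: "t \<notin> range emb \<Longrightarrow> is_line (Rl t)"
  using quad[of t] Rl_eq indep_XY unfolding is_line_def by metis

lemma Pt_ext:
  assumes t: "t \<notin> range emb"
  shows "Pt t \<in> ext_line emb (Rl t)" "Pt (F t) \<in> ext_line emb (Rl t)"
proof -
  obtain u v where q: "t ^ 2 = emb u * t + emb v" using quad[OF t] by blast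
  have qF: "F t ^ 2 = emb u * F t + emb v" by (rule Ft_quad[OF t q])
  have m: "X0 u v \<in> Rl t" "Y0 u v \<in> Rl t" using X0_Rl[OF t q] Y0_Rl[OF t q] by auto
  have "Pt t = t *s embv (X0 u v) + 1 *s embv (Y0 u v)" using Pt_expand[OF q] by simp
  then show "Pt t \<in> ext_line emb (Rl t)" unfolding ext_line_embv using m by blast
  have "Pt (F t) = F t *s embv (X0 u v) + 1 *s embv (Y0 u v)" using Pt_expand[OF qF] by simp
  then show "Pt (F t) \<in> ext_line emb (Rl t)" unfolding ext_line_embv using m by blast
qed

lemma chord_Rl: "t \<notin> range emb \<Longrightarrow> imaginary_chord emb (Rl t)"
  unfolding imaginary_chord_def using Rl_line Pt_ext unfolding F_def by blast

lemma indep_emb: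
  assumes t: "t \<notin> range emb" and i: "lin_indep2 u0 v0"
  shows "lin_indep2 (embv u0) (embv v0)"
  unfolding lin_indep2_def
proof (intro allI impI)
  fix ga de assume h: "ga *s embv u0 + de *s embv v0 = 0"
  obtain g1 g2 where g: "ga = emb g1 + emb g2 * t" using decomp[OF t] by blast
  obtain d1 d2 where d: "de = emb d1 + emb d2 * t" using decomp[OF t] by blast
  have "\<forall>i. g1 * u0$i + d1 * v0$i = 0 \<and> g2 * u0$i + d2 * v0$i = 0"
  proof
    fix i
    have "ga * emb (u0$i) + de * emb (v0$i) = 0" using arg_cong[OF h, of "\<lambda>z. z$i"] by simp
    then have "emb (g1 * u0$i + d1 * v0$i) + emb (g2 * u0$i + d2 * v0$i) * t = emb 0 + emb 0 * t"
      unfolding g d by (simp add: algebra_simps)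
    then show "g1 * u0$i + d1 * v0$i = 0 \<and> g2 * u0$i + d2 * v0$i = 0"
      using decomp_unique[OF t] by blast
  qed
  then have "g1 *s u0 + d1 *s v0 = 0" "g2 *s u0 + d2 *s v0 = 0" by (simp_all add: vec_eq_iff)
  then have "g1 = 0 \<and> d1 = 0" "g2 = 0 \<and> d2 = 0" using i unfolding lin_indep2_def by blast+
  then show "ga = 0 \<and> de = 0" using g d by simp
qed

lemma embv_span: "u \<in> span2 u0 v0 \<Longrightarrow> embv u \<in> span2 (embv u0) (embv v0)"
proof -
  assume "u \<in> span2 u0 v0"
  then obtain a b where "u = a *s u0 + b *s v0" by (auto simp: span2_def)
  then have "embv u = emb a *s embv u0 + emb b *s embv v0" by (simp add: embv_lin)
  then show ?thesis by (metis span2_I)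
qed

lemma ext_sub: "ext_line emb (span2 u0 v0) \<subseteq> span2 (embv u0) (embv v0)"
proof
  fix z assume "z \<in> ext_line emb (span2 u0 v0)"
  then obtain a b u v where z: "z = a *s embv u + b *s embv v" and uv: "u \<in> span2 u0 v0" "v \<in> span2 u0 v0"
    unfolding ext_line_embv by blast
  have "embv u \<in> span2 (embv u0) (embv v0)" "embv v \<in> span2 (embv u0) (embv v0)"
    using uv embv_span by blast+
  then show "z \<in> span2 (embv u0) (embv v0)" unfolding z by (rule span2_lin)
qed

lemma chord_is_Rl:
  assumes c: "imaginary_chord emb L"
  shows "\<exists>t. t \<notin> range emb \<and> L = Rl t"
proof -
  obtain u0 v0 where i: "lin_indep2 u0 v0" and L: "L = span2 u0 v0"
    using c unfolding imaginary_chord_def is_line_def by blast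
  obtain t where t: "t \<notin> range emb" and p1: "Pt t \<in> ext_line emb L"
    and p2: "Pt (F t) \<in> ext_line emb L"
    using c unfolding imaginary_chord_def F_def by blast
  let ?W = "span2 (embv u0) (embv v0)"
  have w: "Pt t \<in> ?W" "Pt (F t) \<in> ?W" using p1 p2 ext_sub L by blast+
  have ie: "lin_indep2 (embv u0) (embv v0)" by (rule indep_emb[OF t i])
  have sub: "Rl t \<subseteq> L"
  proof
    fix x assume "x \<in> Rl t"
    then obtain al be where e: "embv x = al *s Pt t + be *s Pt (F t)" by (auto simp: Rl_def)
    have "embv x \<in> ?W" unfolding e using w by (rule span2_lin)
    then obtain ga de where e2: "embv x = ga *s embv u0 + de *s embv v0" by (auto simp: span2_def)
    have "(ga - F ga) *s embv u0 + (de - F de) *s embv v0 = 0"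
    proof -
      have "\<forall>i. (ga - F ga) * emb (u0$i) + (de - F de) * emb (v0$i) = 0"
      proof
        fix i
        have h: "emb (x$i) = ga * emb (u0$i) + de * emb (v0$i)" using arg_cong[OF e2, of "\<lambda>z. z$i"] by simp
        have "emb (x$i) = F (emb (x$i))" by simp
        also have "\<dots> = F (ga * emb (u0$i) + de * emb (v0$i))" by (simp only: h)
        also have "\<dots> = F ga * emb (u0$i) + F de * emb (v0$i)" by (simp add: F_add F_mult)
        finally have h2: "emb (x$i) = F ga * emb (u0$i) + F de * emb (v0$i)" .
        have "(ga - F ga) * emb (u0$i) + (de - F de) * emb (v0$i)
          = (ga * emb (u0$i) + de * emb (v0$i)) - (F ga * emb (u0$i) + F de * emb (v0$i))"
          by (simp add: algebra_simps)
        then show "(ga - F ga) * emb (u0$i) + (de - F de) * emb (v0$i) = 0" using h h2 by simp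
      qed
      then show ?thesis by (simp add: vec_eq_iff)
    qed
    then have "ga - F ga = 0 \<and> de - F de = 0" using ie unfolding lin_indep2_def by blast
    then have "F ga = ga" "F de = de" by simp_all
    then obtain g d where gd: "ga = emb g" "de = emb d" using F_fix by blast
    have "embv x = embv (g *s u0 + d *s v0)" unfolding e2 gd embv_lin ..
    then have "x = g *s u0 + d *s v0" by (rule embv_inj)
    then show "x \<in> L" unfolding L by (metis span2_I)
  qed
  obtain u v where q: "t ^ 2 = emb u * t + emb v" using quad[OF t] by blast
  have "span2 (X0 u v) (Y0 u v) = span2 u0 v0"
    using line_eq[OF i indep_XY] X0_Rl[OF t q] Y0_Rl[OF t q] sub L by blast
  then show ?thesis using Rl_eq[OF t q] L t by auto
qed

end

lemma Mabcd_P: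
  fixes A B C D z :: "'c::field"
  shows "Pt z v* Mabcd A B C D = vec4 ((A*z+B)^3) ((A*z+B)^2*(C*z+D)) ((A*z+B)*(C*z+D)^2) ((C*z+D)^3)"
  unfolding vec4_eq_iff vm4 Pt_def Mabcd_def
  by (simp add: power2_eq_square power3_eq_cube algebra_simps)

lemma vec4_scale_aux:
  fixes N w :: "'c::field"
  assumes "w \<noteq> 0"
  shows "vec4 (N^3) (N^2*w) (N*w^2) (w^3) = w^3 *s Pt (N/w)"
  using assms by (simp add: vec4_eq_iff Pt_def power_divide power2_eq_square power3_eq_cube)

lemma Mabcd_P':
  fixes A B C D z :: "'c::field"
  assumes "C*z+D \<noteq> 0"
  shows "Pt z v* Mabcd A B C D = (C*z+D)^3 *s Pt ((A*z+B)/(C*z+D))"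
  unfolding Mabcd_P using vec4_scale_aux[OF assms] .

lemma Pt_indep:
  fixes z z' :: "'c::field"
  assumes "z \<noteq> z'" "ga *s Pt z + de *s Pt z' = 0"
  shows "ga = 0 \<and> de = 0"
proof -
  have e3: "ga + de = 0" using arg_cong[OF assms(2), of "\<lambda>x. x$3"] by (simp add: Pt_def)
  have e2: "ga * z + de * z' = 0" using arg_cong[OF assms(2), of "\<lambda>x. x$2"] by (simp add: Pt_def)
  have "ga * (z - z') = (ga * z + de * z') - (ga + de) * z'" by (simp add: algebra_simps)
  then have "ga * (z - z') = 0" using e2 e3 by simp
  then show ?thesis using assms(1) e3 by simp
qed

lemma act_span2: "act_line M (span2 u v) = span2 (u v* M) (v v* (M::'c::field^4^4))"
proof
  show "act_line M (span2 u v) \<subseteq> span2 (u v* M) (v v* M)"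
  proof
    fix y assume "y \<in> act_line M (span2 u v)"
    then obtain a b where "y = (a *s u + b *s v) v* M" unfolding act_line_def span2_def by blast
    then have "y = a *s (u v* M) + b *s (v v* M)" by (simp add: vm_lin)
    then show "y \<in> span2 (u v* M) (v v* M)" by (metis span2_I)
  qed
  show "span2 (u v* M) (v v* M) \<subseteq> act_line M (span2 u v)"
  proof
    fix y assume "y \<in> span2 (u v* M) (v v* M)"
    then obtain a b where "y = a *s (u v* M) + b *s (v v* M)" unfolding span2_def by blast
    then have "y = (a *s u + b *s v) v* M" by (simp add: vm_lin)
    then show "y \<in> act_line M (span2 u v)" unfolding act_line_def by (metis span2_I image_eqI)
  qed
qed

context sett
begin

lemma embv_M: "embv (x v* Mabcd a b c d) = embv x v* Mabcd (emb a) (emb b) (emb c) (emb d)"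
  unfolding vec4_eq_iff by (simp add: vm4 Mabcd_def)

definition mob :: "'a \<Rightarrow> 'a \<Rightarrow> 'a \<Rightarrow> 'a \<Rightarrow> 'b \<Rightarrow> 'b" where
  "mob a b c d z = (emb a * z + emb b) / (emb c * z + emb d)"

lemma den_nz:
  assumes z: "z \<notin> range emb" and det: "a * d - b * c \<noteq> 0"
  shows "emb c * z + emb d \<noteq> 0"
proof
  assume h: "emb c * z + emb d = 0"
  show False
  proof (cases "c = 0")
    case True then show False using h det by simp
  next
    case False
    then have "z = emb (- d / c)" using h by (simp add: field_simps) (metis add_eq_0_iff mult.commute)
    then show False using z by (metis rangeI)
  qed
qed

lemma mob_notin:
  assumes z: "z \<notin> range emb" and det: "a * d - b * c \<noteq> 0"
  shows "mob a b c d z \<notin> range emb"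
proof
  assume "mob a b c d z \<in> range emb"
  then obtain k where k: "mob a b c d z = emb k" by blast
  have dn: "emb c * z + emb d \<noteq> 0" by (rule den_nz[OF z det])
  have e: "emb a * z + emb b = emb k * (emb c * z + emb d)" using k dn by (simp add: mob_def field_simps)
  then have e2: "z * emb (a - k * c) = emb (k * d - b)" by (simp add: algebra_simps)
  show False
  proof (cases "a - k * c = 0")
    case True
    then have "emb (k * d - b) = 0" using e2 by (metis emb_zero mult_zero_right)
    then have "k * d - b = 0" by (metis emb_eq0_iff)
    then have "a * d - b * c = 0" using True by (simp add: algebra_simps)
    then show False using det by simp
  next
    case False
    then have ne: "emb (a - k * c) \<noteq> 0" by (metis emb_eq0_iff)
    have "z = emb (k * d - b) / emb (a - k * c)" using e2 ne by (metis nonzero_mult_div_cancel_right)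
    then have "z = emb ((k * d - b) / (a - k * c))" by (metis emb_divide)
    then show False using z by (metis rangeI)
  qed
qed

lemma F_mob: "F (mob a b c d z) = mob a b c d (F z)"
  by (simp add: mob_def F_hom)

lemma mob_inj:
  assumes z: "z \<notin> range emb" "z' \<notin> range emb" and det: "a * d - b * c \<noteq> 0"
    and e: "mob a b c d z = mob a b c d z'"
  shows "z = z'"
proof -
  have d1: "emb c * z + emb d \<noteq> 0" "emb c * z' + emb d \<noteq> 0" using den_nz z det by auto
  have "(emb a * z + emb b) * (emb c * z' + emb d) = (emb a * z' + emb b) * (emb c * z + emb d)"
    using e d1 by (simp add: mob_def field_simps)
  then have "emb (a * d - b * c) * (z - z') = 0" by (simp add: algebra_simps)
  then show ?thesis using det by (metis emb_eq0_iff mult_eq_0_iff right_minus_eq)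
qed

lemma P_act:
  assumes z: "z \<notin> range emb" and det: "a * d - b * c \<noteq> 0"
  shows "Pt z v* Mabcd (emb a) (emb b) (emb c) (emb d) = (emb c * z + emb d)^3 *s Pt (mob a b c d z)"
  unfolding mob_def by (rule Mabcd_P'[OF den_nz[OF z det]])

lemma act_Rl:
  assumes t: "t \<notin> range emb" and det: "a * d - b * c \<noteq> 0"
  shows "act_line (Mabcd a b c d) (Rl t) = Rl (mob a b c d t)"
proof -
  let ?M = "Mabcd a b c d" and ?M' = "Mabcd (emb a) (emb b) (emb c) (emb d)"
  let ?s = "mob a b c d t"
  have Ft: "F t \<notin> range emb" by (rule F_notin[OF t])
  have s: "?s \<notin> range emb" by (rule mob_notin[OF t det])
  have Fs: "F ?s = mob a b c d (F t)" by (rule F_mob)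
  define k1 where "k1 = (emb c * t + emb d)^3"
  define k2 where "k2 = (emb c * F t + emb d)^3"
  have k: "k1 \<noteq> 0" "k2 \<noteq> 0" unfolding k1_def k2_def using den_nz[OF t det] den_nz[OF Ft det] by auto
  have img: "embv (x v* ?M) = (al * k1) *s Pt ?s + (be * k2) *s Pt (F ?s)"
    if "embv x = al *s Pt t + be *s Pt (F t)" for x al be
    unfolding embv_M that vm_lin P_act[OF t det] P_act[OF Ft det] Fs k1_def k2_def
    by (simp add: vector_smult_assoc)
  have sub: "\<And>x. x \<in> Rl t \<Longrightarrow> x v* ?M \<in> Rl ?s"
    using img unfolding Rl_def by blast
  obtain u v where q: "t ^ 2 = emb u * t + emb v" using quad[OF t] by blast
  have "act_line ?M (Rl t) = span2 (X0 u v v* ?M) (Y0 u v v* ?M)"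
    unfolding Rl_eq[OF t q] act_span2 ..
  moreover have ind: "lin_indep2 (X0 u v v* ?M) (Y0 u v v* ?M)"
    unfolding lin_indep2_def
  proof (intro allI impI)
    fix al be assume h: "al *s (X0 u v v* ?M) + be *s (Y0 u v v* ?M) = 0"
    let ?z = "al *s X0 u v + be *s Y0 u v"
    have zR: "?z \<in> Rl t" unfolding Rl_eq[OF t q] by (rule span2_I)
    then obtain ga de where e: "embv ?z = ga *s Pt t + de *s Pt (F t)" by (auto simp: Rl_def)
    have "?z v* ?M = 0" using h by (simp add: vm_lin)
    then have "embv (?z v* ?M) = 0" by (simp add: vec_eq_iff)
    then have "(ga * k1) *s Pt ?s + (de * k2) *s Pt (F ?s) = 0" using img[OF e] by simp
    moreover have "?s \<noteq> F ?s" using F_fix s by metis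
    ultimately have "ga * k1 = 0 \<and> de * k2 = 0" using Pt_indep by blast
    then have "ga = 0 \<and> de = 0" using k by simp
    then have "embv ?z = embv 0" using e by (simp add: vec_eq_iff)
    then have "?z = 0" by (rule embv_inj)
    then show "al = 0 \<and> be = 0" using indep_XY unfolding lin_indep2_def by blast
  qed
  moreover obtain u' v' where q': "?s ^ 2 = emb u' * ?s + emb v'" using quad[OF s] by blast
  moreover have "X0 u v v* ?M \<in> Rl ?s" "Y0 u v v* ?M \<in> Rl ?s"
    using sub X0_Rl[OF t q] Y0_Rl[OF t q] by auto
  ultimately show ?thesis
    using line_eq[OF indep_XY ind] Rl_eq[OF s q'] by metis
qed

end

lemma smat_nth[simp]: "smat c M $ i $ j = c * M $ i $ j"
  by (simp add: smat_def)

lemma mat4_eq_iff: "(M::'c^4^4) = N \<longleftrightarrow> (\<forall>i\<in>{0,1,2,3}. \<forall>j\<in>{0,1,2,3}. M$i$j = N$i$j)"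
proof
  assume h: "\<forall>i\<in>{0,1,2,3}. \<forall>j\<in>{0,1,2,3}. M$i$j = N$i$j"
  show "M = N" unfolding vec_eq_iff
  proof (intro allI)
    fix i j :: 4
    show "M$i$j = N$i$j" using h four_cases[of i] four_cases[of j] by auto
  qed
qed simp

lemma vm_smat: "x v* smat c M = c *s (x v* (M::'c::comm_ring_1^4^4))"
  by (simp add: vec_eq_iff vm4 algebra_simps)

lemma smat_smat: "smat a (smat b M) = smat (a * b) (M::'c::field^4^4)"
  by (simp add: vec_eq_iff mult.assoc)

lemma smat_one: "smat 1 M = (M::'c::field^4^4)"
  by (simp add: vec_eq_iff)

lemma pc_mem: "M \<in> proj_class (M::'c::field^4^4)"
  unfolding proj_class_def using smat_one[of M] by (metis (mono_tags, lifting) mem_Collect_eq one_neq_zero)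

lemma pc_smat: "(m::'c::field) \<noteq> 0 \<Longrightarrow> proj_class (smat m M) = proj_class M"
proof -
  assume m: "m \<noteq> 0"
  show ?thesis
  proof
    show "proj_class (smat m M) \<subseteq> proj_class M"
      unfolding proj_class_def using m by (auto simp: smat_smat)
    show "proj_class M \<subseteq> proj_class (smat m M)"
    proof
      fix N assume "N \<in> proj_class M"
      then obtain c where c: "c \<noteq> 0" "N = smat c M" unfolding proj_class_def by blast
      then have "N = smat (c / m) (smat m M)" using m by (simp add: smat_smat)
      moreover have "c / m \<noteq> 0" using c m by simp
      ultimately show "N \<in> proj_class (smat m M)" unfolding proj_class_def by blast
    qed
  qed
qed

lemma pc_eq_imp: "proj_class M = proj_class N \<Longrightarrow> \<exists>m. m \<noteq> 0 \<and> M = smat m (N::'c::field^4^4)"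
proof -
  assume "proj_class M = proj_class N"
  then have "M \<in> proj_class N" using pc_mem by metis
  then show ?thesis unfolding proj_class_def by blast
qed

lemma Mabcd_hom: "Mabcd (l*a) (l*b) (l*c) (l*d) = smat (l^3) (Mabcd a b c (d::'c::field))"
  unfolding mat4_eq_iff by (simp add: Mabcd_def power2_eq_square power3_eq_cube algebra_simps)

lemma Gq_iff: "g \<in> Gq \<longleftrightarrow> (\<exists>a b c d. a * d - b * c \<noteq> 0 \<and> g = proj_class (Mabcd a b c d))"
  unfolding Gq_def by blast

lemma three_points:
  fixes z1 z2 z3 :: "'c::field"
  assumes d: "z1 \<noteq> z2" "z1 \<noteq> z3" "z2 \<noteq> z3" and e: "Pt z3 = ga *s Pt z1 + de *s Pt z2"
  shows False
proof -
  have e1: "ga + de - 1 = 0" using arg_cong[OF e, of "\<lambda>x. x$3"] by (simp add: Pt_def)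
  have e2: "ga * z1 + de * z2 - z3 = 0" using arg_cong[OF e, of "\<lambda>x. x$2"] by (simp add: Pt_def)
  have e3: "ga * z1^2 + de * z2^2 - z3^2 = 0" using arg_cong[OF e, of "\<lambda>x. x$1"] by (simp add: Pt_def)
  have "de * ((z2 - z3) * (z2 - z1)) = (ga * z1^2 + de * z2^2 - z3^2) - (z1 + z3) * (ga * z1 + de * z2 - z3) + z1 * z3 * (ga + de - 1)"
    by (simp add: algebra_simps power2_eq_square)
  then have "de * ((z2 - z3) * (z2 - z1)) = 0" using e1 e2 e3 by simp
  then have de: "de = 0" using d by simp
  then have "ga * (z1 - z3) = (ga * z1 + de * z2 - z3) - z3 * (ga + de - 1)" by (simp add: algebra_simps)
  then have "ga * (z1 - z3) = 0" using e1 e2 by simp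
  then have "ga = 0" using d by simp
  then show False using e1 de by simp
qed

context sett
begin

definition embM :: "'a^4^4 \<Rightarrow> 'b^4^4" where "embM M = (\<chi> i j. emb (M$i$j))"

lemma embM_nth[simp]: "embM M $ i $ j = emb (M$i$j)" by (simp add: embM_def)

lemma embM_Mabcd: "embM (Mabcd a b c d) = Mabcd (emb a) (emb b) (emb c) (emb d)"
  unfolding mat4_eq_iff by (simp add: Mabcd_def)

lemma embM_smat: "embM (smat m M) = smat (emb m) (embM M)"
  by (simp add: vec_eq_iff)

lemma mob_welldef:
  assumes z: "z \<notin> range emb" and det: "a * d - b * c \<noteq> 0" and det': "a' * d' - b' * c' \<noteq> 0"
    and e: "Mabcd a b c d = smat m (Mabcd a' b' c' d')"
  shows "mob a b c d z = mob a' b' c' d' z"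
proof -
  have "embM (Mabcd a b c d) = smat (emb m) (embM (Mabcd a' b' c' d'))" using e embM_smat by metis
  then have "Pt z v* Mabcd (emb a) (emb b) (emb c) (emb d) = emb m *s (Pt z v* Mabcd (emb a') (emb b') (emb c') (emb d'))"
    by (simp add: embM_Mabcd vm_smat)
  then have h: "(emb c * z + emb d)^3 *s Pt (mob a b c d z) = (emb m * (emb c' * z + emb d')^3) *s Pt (mob a' b' c' d' z)"
    unfolding P_act[OF z det] P_act[OF z det'] by (simp add: vector_smult_assoc)
  define k where "k = (emb c * z + emb d)^3"
  define k' where "k' = emb m * (emb c' * z + emb d')^3"
  have k: "k \<noteq> 0" unfolding k_def using den_nz[OF z det] by simp
  have h3: "k = k'" using arg_cong[OF h, of "\<lambda>x. x$3"] by (simp add: Pt_def k_def k'_def)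
  have h2: "k * mob a b c d z = k' * mob a' b' c' d' z" using arg_cong[OF h, of "\<lambda>x. x$2"] by (simp add: Pt_def k_def k'_def)
  then show ?thesis using h3 k by simp
qed

lemma act_pc:
  assumes t: "t \<notin> range emb" and det: "a * d - b * c \<noteq> 0" and M: "M \<in> proj_class (Mabcd a b c d)"
  shows "act_line M (Rl t) = Rl (mob a b c d t)"
proof -
  obtain m where m: "m \<noteq> 0" "M = smat m (Mabcd a b c d)" using M unfolding proj_class_def by blast
  have "act_line M (Rl t) = (\<lambda>x. m *s x) ` act_line (Mabcd a b c d) (Rl t)"
    unfolding m act_line_def by (auto simp: vm_smat image_image)
  also have "\<dots> = (\<lambda>x. m *s x) ` Rl (mob a b c d t)" unfolding act_Rl[OF t det] ..
  also have "\<dots> = Rl (mob a b c d t)"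
  proof -
    let ?s = "mob a b c d t"
    have s: "?s \<notin> range emb" by (rule mob_notin[OF t det])
    obtain u v where q: "?s ^ 2 = emb u * ?s + emb v" using quad[OF s] by blast
    show ?thesis unfolding Rl_eq[OF s q]
    proof
      show "(\<lambda>x. m *s x) ` span2 (X0 u v) (Y0 u v) \<subseteq> span2 (X0 u v) (Y0 u v)"
      proof
        fix y assume "y \<in> (\<lambda>x. m *s x) ` span2 (X0 u v) (Y0 u v)"
        then obtain a b where "y = m *s (a *s X0 u v + b *s Y0 u v)" unfolding span2_def by blast
        then have "y = (m * a) *s X0 u v + (m * b) *s Y0 u v" by (simp add: vec_eq_iff algebra_simps)
        then show "y \<in> span2 (X0 u v) (Y0 u v)" by (metis span2_I)
      qed
      show "span2 (X0 u v) (Y0 u v) \<subseteq> (\<lambda>x. m *s x) ` span2 (X0 u v) (Y0 u v)"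
      proof
        fix y assume "y \<in> span2 (X0 u v) (Y0 u v)"
        then obtain a b where y: "y = a *s X0 u v + b *s Y0 u v" unfolding span2_def by blast
        then have "y = m *s ((a / m) *s X0 u v + (b / m) *s Y0 u v)" using m by (simp add: vec_eq_iff algebra_simps)
        then show "y \<in> (\<lambda>x. m *s x) ` span2 (X0 u v) (Y0 u v)" by (metis span2_I image_eqI)
      qed
    qed
  qed
  finally show ?thesis .
qed

lemma orbit_Rl:
  assumes t: "t \<notin> range emb"
  shows "orbit (Rl t) = {L. imaginary_chord emb L}"
proof
  show "orbit (Rl t) \<subseteq> {L. imaginary_chord emb L}"
  proof
    fix L assume "L \<in> orbit (Rl t)"
    then obtain M g where L: "L = act_line M (Rl t)" and g: "g \<in> Gq" "M \<in> g" unfolding orbit_def by blast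
    obtain a b c d where det: "a * d - b * c \<noteq> 0" and gg: "g = proj_class (Mabcd a b c d)" using g(1) unfolding Gq_iff by blast
    have "L = Rl (mob a b c d t)" using act_pc[OF t det] g(2) unfolding gg L by blast
    then show "L \<in> {L. imaginary_chord emb L}" using chord_Rl mob_notin[OF t det] by blast
  qed
  show "{L. imaginary_chord emb L} \<subseteq> orbit (Rl t)"
  proof
    fix L assume "L \<in> {L. imaginary_chord emb L}"
    then obtain s where s: "s \<notin> range emb" and L: "L = Rl s" using chord_is_Rl by blast
    obtain al be where sd: "s = emb al + emb be * t" using decomp[OF t] by blast
    have be: "be \<noteq> 0" using s sd by auto
    have det: "be * 1 - al * 0 \<noteq> 0" using be by simp
    have "mob be al 0 1 t = s" unfolding mob_def sd by (simp add: algebra_simps)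
    then have "act_line (Mabcd be al 0 1) (Rl t) = L" using act_pc[OF t det pc_mem] L by simp
    moreover have "proj_class (Mabcd be al 0 1) \<in> Gq" using det unfolding Gq_iff by blast
    ultimately show "L \<in> orbit (Rl t)" unfolding orbit_def using pc_mem by blast
  qed
qed

lemma Rl_F: "Rl (F t) = Rl t"
  unfolding Rl_def by (auto simp: add.commute)

lemma Rl_eq_iff:
  assumes s: "s \<notin> range emb" and t: "t \<notin> range emb"
  shows "Rl s = Rl t \<longleftrightarrow> s = t \<or> s = F t"
proof
  assume "s = t \<or> s = F t" then show "Rl s = Rl t" using Rl_F by auto
next
  assume e: "Rl s = Rl t"
  show "s = t \<or> s = F t"
  proof (rule ccontr)
    assume n: "\<not> (s = t \<or> s = F t)"
    obtain u v where q: "s ^ 2 = emb u * s + emb v" using quad[OF s] by blast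
    have "X0 u v \<in> Rl t" "Y0 u v \<in> Rl t" using X0_Rl[OF s q] Y0_Rl[OF s q] e by auto
    then obtain a1 b1 a2 b2 where x: "embv (X0 u v) = a1 *s Pt t + b1 *s Pt (F t)"
      and y: "embv (Y0 u v) = a2 *s Pt t + b2 *s Pt (F t)" unfolding Rl_def by blast
    have "Pt s = (s * a1 + a2) *s Pt t + (s * b1 + b2) *s Pt (F t)"
      unfolding Pt_expand[OF q] x y by (simp add: vec_eq_iff algebra_simps)
    moreover have "t \<noteq> F t" using F_fix t by metis
    ultimately show False using three_points n by metis
  qed
qed

end

definition M1 :: "'a::field \<Rightarrow> 'a \<Rightarrow> 'a \<Rightarrow> 'a \<Rightarrow> 'a^4^4" where
  "M1 u v c d = Mabcd (d + c * u) (c * v) c d"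
definition M2 :: "'a::field \<Rightarrow> 'a \<Rightarrow> 'a \<Rightarrow> 'a \<Rightarrow> 'a^4^4" where
  "M2 u v c d = Mabcd (- d) (d * u - c * v) c d"

context sett
begin

lemma qform_nz:
  assumes t: "t \<notin> range emb" and q: "t ^ 2 = emb u * t + emb v"
  shows "d * d + c * u * d - c * c * v \<noteq> 0 \<longleftrightarrow> (c \<noteq> 0 \<or> d \<noteq> 0)"
proof
  assume "d * d + c * u * d - c * c * v \<noteq> 0" then show "c \<noteq> 0 \<or> d \<noteq> 0" by auto
next
  assume cd: "c \<noteq> 0 \<or> d \<noteq> 0"
  show "d * d + c * u * d - c * c * v \<noteq> 0"
  proof (cases "c = 0")
    case True then show ?thesis using cd by simp
  next
    case False
    define x where "x = - d / c"
    have "(x ^ 2 - (u * x + v)) * (c * c) = d * d + c * u * d - c * c * v"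
      unfolding x_def using False by (simp add: field_simps power2_eq_square)
    moreover have "x ^ 2 - (u * x + v) \<noteq> 0" using irr[OF t q, of x] by simp
    ultimately show ?thesis using False by (metis mult_eq_0_iff)
  qed
qed

lemma mob_fix_iff:
  assumes t: "t \<notin> range emb" and q: "t ^ 2 = emb u * t + emb v" and det: "a * d - b * c \<noteq> 0"
  shows "mob a b c d t = t \<longleftrightarrow> a = d + c * u \<and> b = c * v"
proof -
  have dn: "emb c * t + emb d \<noteq> 0" by (rule den_nz[OF t det])
  have "mob a b c d t = t \<longleftrightarrow> emb a * t + emb b = t * (emb c * t + emb d)"
    unfolding mob_def using dn by (simp add: field_simps)
  also have "t * (emb c * t + emb d) = emb (c * v) + emb (d + c * u) * t"
  proof -
    have "t * (emb c * t + emb d) = emb c * t^2 + emb d * t" by (simp add: algebra_simps power2_eq_square)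
    also have "\<dots> = emb (c * v) + emb (d + c * u) * t" unfolding q by (simp add: algebra_simps)
    finally show ?thesis .
  qed
  also have "emb a * t + emb b = emb b + emb a * t" by (simp add: add.commute)
  also have "emb b + emb a * t = emb (c * v) + emb (d + c * u) * t \<longleftrightarrow> b = c * v \<and> a = d + c * u"
    using decomp_unique[OF t] by (metis emb_add emb_mult)
  finally show ?thesis by blast
qed

lemma mob_swap_iff:
  assumes t: "t \<notin> range emb" and q: "t ^ 2 = emb u * t + emb v" and det: "a * d - b * c \<noteq> 0"
  shows "mob a b c d t = F t \<longleftrightarrow> a = - d \<and> b = d * u - c * v"
proof -
  have dn: "emb c * t + emb d \<noteq> 0" by (rule den_nz[OF t det])
  have "mob a b c d t = F t \<longleftrightarrow> emb a * t + emb b = F t * (emb c * t + emb d)"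
    unfolding mob_def using dn by (simp add: field_simps)
  also have "F t * (emb c * t + emb d) = emb (d * u - c * v) + emb (- d) * t"
  proof -
    have "F t * (emb c * t + emb d) = emb u * emb c * t + emb u * emb d - emb c * t^2 - emb d * t"
      unfolding F_conj[OF t q] by (simp add: algebra_simps power2_eq_square)
    also have "\<dots> = emb (d * u - c * v) + emb (- d) * t" unfolding q by (simp add: algebra_simps)
    finally show ?thesis .
  qed
  also have "emb a * t + emb b = emb b + emb a * t" by (simp add: add.commute)
  also have "emb b + emb a * t = emb (d * u - c * v) + emb (- d) * t \<longleftrightarrow> b = d * u - c * v \<and> a = - d"
    using decomp_unique[OF t] by metis
  finally show ?thesis by blast
qed

lemma stab_iff:
  assumes t: "t \<notin> range emb" and q: "t ^ 2 = emb u * t + emb v"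
  shows "g \<in> stabiliser (Rl t) \<longleftrightarrow>
    (\<exists>c d. (c \<noteq> 0 \<or> d \<noteq> 0) \<and> (g = proj_class (M1 u v c d) \<or> g = proj_class (M2 u v c d)))"
proof
  assume "g \<in> stabiliser (Rl t)"
  then have g: "g \<in> Gq" and st: "\<forall>M\<in>g. act_line M (Rl t) = Rl t" unfolding stabiliser_def by auto
  obtain a b c d where det: "a * d - b * c \<noteq> 0" and gg: "g = proj_class (Mabcd a b c d)"
    using g unfolding Gq_iff by blast
  have "Rl (mob a b c d t) = Rl t" using st act_pc[OF t det pc_mem] unfolding gg by (metis pc_mem)
  then have "mob a b c d t = t \<or> mob a b c d t = F t" using Rl_eq_iff[OF mob_notin[OF t det] t] by blast
  then show "\<exists>c d. (c \<noteq> 0 \<or> d \<noteq> 0) \<and> (g = proj_class (M1 u v c d) \<or> g = proj_class (M2 u v c d))"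
  proof
    assume "mob a b c d t = t"
    then have "a = d + c * u \<and> b = c * v" using mob_fix_iff[OF t q det] by blast
    then have "g = proj_class (M1 u v c d)" and "c \<noteq> 0 \<or> d \<noteq> 0" using gg det by (auto simp: M1_def)
    then show ?thesis by blast
  next
    assume "mob a b c d t = F t"
    then have "a = - d \<and> b = d * u - c * v" using mob_swap_iff[OF t q det] by blast
    then have "g = proj_class (M2 u v c d)" and "c \<noteq> 0 \<or> d \<noteq> 0" using gg det by (auto simp: M2_def)
    then show ?thesis by blast
  qed
next
  assume "\<exists>c d. (c \<noteq> 0 \<or> d \<noteq> 0) \<and> (g = proj_class (M1 u v c d) \<or> g = proj_class (M2 u v c d))"
  then obtain c d where cd: "c \<noteq> 0 \<or> d \<noteq> 0" and gg: "g = proj_class (M1 u v c d) \<or> g = proj_class (M2 u v c d)" by blast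
  have qf: "d * d + c * u * d - c * c * v \<noteq> 0" using qform_nz[OF t q] cd by blast
  show "g \<in> stabiliser (Rl t)" using gg
  proof
    assume g1: "g = proj_class (M1 u v c d)"
    have det: "(d + c * u) * d - (c * v) * c \<noteq> 0" using qf by (simp add: algebra_simps)
    have A: "g \<in> Gq" unfolding g1 M1_def Gq_iff using det by blast
    have B: "\<forall>M\<in>g. act_line M (Rl t) = Rl t"
    proof
      fix M assume "M \<in> g"
      then have "act_line M (Rl t) = Rl (mob (d + c * u) (c * v) c d t)"
        using act_pc[OF t det] unfolding g1 M1_def by blast
      also have "mob (d + c * u) (c * v) c d t = t" using mob_fix_iff[OF t q det] by blast
      finally show "act_line M (Rl t) = Rl t" .
    qed
    show ?thesis unfolding stabiliser_def mem_Collect_eq using A B by (rule conjI)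
  next
    assume g2: "g = proj_class (M2 u v c d)"
    have "(- d) * d - (d * u - c * v) * c = - (d * d + c * u * d - c * c * v)" by (simp add: algebra_simps)
    then have det: "(- d) * d - (d * u - c * v) * c \<noteq> 0" using qf by (metis neg_equal_0_iff_equal)
    have A: "g \<in> Gq" unfolding g2 M2_def Gq_iff using det by blast
    have B: "\<forall>M\<in>g. act_line M (Rl t) = Rl t"
    proof
      fix M assume "M \<in> g"
      then have "act_line M (Rl t) = Rl (mob (- d) (d * u - c * v) c d t)"
        using act_pc[OF t det] unfolding g2 M2_def by blast
      also have "mob (- d) (d * u - c * v) c d t = F t" using mob_swap_iff[OF t q det] by blast
      finally show "act_line M (Rl t) = Rl t" using Rl_F by simp
    qed
    show ?thesis unfolding stabiliser_def mem_Collect_eq using A B by (rule conjI)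
  qed
qed

end

lemma M1_scale: "M1 u v (l*c) (l*d) = smat (l^3) (M1 u v c (d::'a::field))"
proof -
  have "M1 u v (l*c) (l*d) = Mabcd (l*(d + c*u)) (l*(c * v)) (l*c) (l*d)"
    unfolding M1_def by (simp add: algebra_simps)
  then show ?thesis unfolding Mabcd_hom M1_def .
qed

lemma M2_scale: "M2 u v (l*c) (l*d) = smat (l^3) (M2 u v c (d::'a::field))"
proof -
  have "M2 u v (l*c) (l*d) = Mabcd (l*(-d)) (l*(d*u - c * v)) (l*c) (l*d)"
    unfolding M2_def by (simp add: algebra_simps)
  then show ?thesis unfolding Mabcd_hom M2_def .
qed

lemma M1_entries: "M1 u v c d $ 0 $ 3 = c^3" "M1 u v c d $ 0 $ 2 = (d + c*u) * c^2"
  by (simp_all add: M1_def Mabcd_def)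
lemma M2_entries: "M2 u v c d $ 0 $ 3 = c^3" "M2 u v c d $ 0 $ 2 = (- d) * c^2"
  by (simp_all add: M2_def Mabcd_def)

definition Rep :: "('a::field \<times> 'a) set" where "Rep = insert (0,1) ((\<lambda>d. (1,d)) ` UNIV)"

lemma card_Rep: "card (Rep :: ('a::{finite,field} \<times> 'a) set) = CARD('a) + 1"
proof -
  have "(0,1) \<notin> (\<lambda>d::'a. (1::'a,d)) ` UNIV" by auto
  moreover have "card ((\<lambda>d::'a. (1::'a,d)) ` UNIV) = CARD('a)" by (simp add: card_image inj_on_def)
  ultimately show ?thesis unfolding Rep_def by simp
qed

lemma Rep_nz: "r \<in> Rep \<Longrightarrow> fst r \<noteq> 0 \<or> snd r \<noteq> 0"
  unfolding Rep_def by auto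

lemma Rep_ex:
  assumes "c \<noteq> 0 \<or> (d::'a::field) \<noteq> 0"
  shows "\<exists>l r. l \<noteq> 0 \<and> r \<in> Rep \<and> c = l * fst r \<and> d = l * snd r"
proof (cases "c = 0")
  case True
  then show ?thesis using assms by (intro exI[of _ d] exI[of _ "(0,1)"]) (auto simp: Rep_def)
next
  case False
  then show ?thesis by (intro exI[of _ c] exI[of _ "(1, d / c)"]) (auto simp: Rep_def)
qed

lemma inj_Rep:
  fixes f :: "'a::field \<Rightarrow> 'a \<Rightarrow> 'a"
  assumes r: "r \<in> Rep" "r' \<in> Rep"
    and e3: "fst r ^ 3 = m * fst r' ^ 3"
    and e2: "f (fst r) (snd r) * fst r ^ 2 = m * (f (fst r') (snd r') * fst r' ^ 2)"
    and m: "m \<noteq> 0"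
    and finj: "\<And>d d'. f 1 d = f 1 d' \<Longrightarrow> d = d'"
  shows "r = r'"
  using r e3 e2 m finj unfolding Rep_def by auto

context sett
begin

lemma stab_card:
  assumes t: "t \<notin> range emb" and q: "t ^ 2 = emb u * t + emb v"
  shows "card (stabiliser (Rl t)) = 2 * (CARD('a) + 1)"
proof -
  let ?f1 = "\<lambda>r. proj_class (M1 u v (fst r) (snd r))"
  let ?f2 = "\<lambda>r. proj_class (M2 u v (fst r) (snd r))"
  have S: "stabiliser (Rl t) = ?f1 ` Rep \<union> ?f2 ` Rep"
  proof
    show "stabiliser (Rl t) \<subseteq> ?f1 ` Rep \<union> ?f2 ` Rep"
    proof
      fix g assume "g \<in> stabiliser (Rl t)"
      then obtain c d where cd: "c \<noteq> 0 \<or> d \<noteq> 0" and gg: "g = proj_class (M1 u v c d) \<or> g = proj_class (M2 u v c d)"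
        using stab_iff[OF t q] by blast
      obtain l r where lr: "l \<noteq> 0" "r \<in> Rep" "c = l * fst r" "d = l * snd r" using Rep_ex[OF cd] by blast
      have "proj_class (M1 u v c d) = ?f1 r" unfolding lr(3,4) M1_scale using lr(1) by (simp add: pc_smat)
      moreover have "proj_class (M2 u v c d) = ?f2 r" unfolding lr(3,4) M2_scale using lr(1) by (simp add: pc_smat)
      ultimately show "g \<in> ?f1 ` Rep \<union> ?f2 ` Rep" using gg lr(2) by blast
    qed
    show "?f1 ` Rep \<union> ?f2 ` Rep \<subseteq> stabiliser (Rl t)"
      using stab_iff[OF t q] Rep_nz by blast
  qed
  have i1: "inj_on ?f1 Rep"
  proof (rule inj_onI)
    fix r r' assume r: "r \<in> Rep" "r' \<in> Rep" and e: "?f1 r = ?f1 r'"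
    obtain m where m: "m \<noteq> 0" "M1 u v (fst r) (snd r) = smat m (M1 u v (fst r') (snd r'))"
      using pc_eq_imp[OF e] by blast
    have e3: "fst r ^ 3 = m * fst r' ^ 3" using arg_cong[OF m(2), of "\<lambda>M. M $ 0 $ 3"] by (simp add: M1_entries)
    have e2: "(snd r + fst r * u) * fst r ^ 2 = m * ((snd r' + fst r' * u) * fst r' ^ 2)"
      using arg_cong[OF m(2), of "\<lambda>M. M $ 0 $ 2"] by (simp add: M1_entries)
    show "r = r'" by (rule inj_Rep[OF r e3 _ m(1), of "\<lambda>c d. d + c * u"]) (use e2 in auto)
  qed
  have i2: "inj_on ?f2 Rep"
  proof (rule inj_onI)
    fix r r' assume r: "r \<in> Rep" "r' \<in> Rep" and e: "?f2 r = ?f2 r'"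
    obtain m where m: "m \<noteq> 0" "M2 u v (fst r) (snd r) = smat m (M2 u v (fst r') (snd r'))"
      using pc_eq_imp[OF e] by blast
    have e3: "fst r ^ 3 = m * fst r' ^ 3" using arg_cong[OF m(2), of "\<lambda>M. M $ 0 $ 3"] by (simp add: M2_entries)
    have e2: "(- snd r) * fst r ^ 2 = m * ((- snd r') * fst r' ^ 2)"
      using arg_cong[OF m(2), of "\<lambda>M. M $ 0 $ 2"] by (simp add: M2_entries)
    show "r = r'" by (rule inj_Rep[OF r e3 _ m(1), of "\<lambda>c d. - d"]) (use e2 in auto)
  qed
  have disj: "?f1 ` Rep \<inter> ?f2 ` Rep = {}"
  proof (rule ccontr)
    assume "?f1 ` Rep \<inter> ?f2 ` Rep \<noteq> {}"
    then obtain r r' where r: "r \<in> Rep" "r' \<in> Rep" and e: "?f1 r = ?f2 r'" by blast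
    obtain m where m: "m \<noteq> 0" "M1 u v (fst r) (snd r) = smat m (M2 u v (fst r') (snd r'))"
      using pc_eq_imp[OF e] by blast
    define c where "c = fst r" define d where "d = snd r"
    define c' where "c' = fst r'" define d' where "d' = snd r'"
    have cd: "c \<noteq> 0 \<or> d \<noteq> 0" "c' \<noteq> 0 \<or> d' \<noteq> 0" using Rep_nz[OF r(1)] Rep_nz[OF r(2)] unfolding c_def d_def c'_def d'_def by auto
    have qf: "d * d + c * u * d - c * c * v \<noteq> 0" "d' * d' + c' * u * d' - c' * c' * v \<noteq> 0"
      using qform_nz[OF t q] cd by blast+
    have det1: "(d + c * u) * d - (c * v) * c \<noteq> 0" using qf by (simp add: algebra_simps)
    have "(- d') * d' - (d' * u - c' * v) * c' = - (d' * d' + c' * u * d' - c' * c' * v)" by (simp add: algebra_simps)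
    then have det2: "(- d') * d' - (d' * u - c' * v) * c' \<noteq> 0" using qf by (metis neg_equal_0_iff_equal)
    have "mob (d + c * u) (c * v) c d t = mob (- d') (d' * u - c' * v) c' d' t"
      using mob_welldef[OF t det1 det2] m(2) unfolding M1_def M2_def c_def d_def c'_def d'_def by blast
    then have "t = F t" using mob_fix_iff[OF t q det1] mob_swap_iff[OF t q det2] by simp
    then show False using F_fix t by metis
  qed
  have "card (stabiliser (Rl t)) = card (?f1 ` Rep) + card (?f2 ` Rep)"
    unfolding S by (rule card_Un_disjoint) (use disj in auto)
  also have "\<dots> = 2 * (CARD('a) + 1)" using card_image[OF i1] card_image[OF i2] card_Rep[where 'a='a] by simp
  finally show ?thesis .
qed

lemma stab_form:
  assumes t: "t \<notin> range emb" and q: "t ^ 2 = emb u * t + emb v" and g: "g \<in> stabiliser (Rl t)"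
  shows "\<exists>c d. (c \<noteq> 0 \<or> d \<noteq> 0) \<and> (M1 u v c d \<in> g \<or> M2 u v c d \<in> g)"
  using stab_iff[OF t q] g pc_mem by metis

end

lemma card_2to1:
  assumes fin: "finite A" and fib: "\<And>x. x \<in> A \<Longrightarrow> card {y\<in>A. f y = f x} = 2"
  shows "card A = 2 * card (f ` A)"
proof -
  have A: "A = (\<Union>z\<in>f ` A. {y\<in>A. f y = z})" by auto
  have "card A = (\<Sum>z\<in>f ` A. card {y\<in>A. f y = z})"
    by (subst A, rule card_UN_disjoint) (use fin in auto)
  also have "\<dots> = (\<Sum>z\<in>f ` A. 2)"
    by (rule sum.cong) (auto simp: fib)
  finally show ?thesis by simp
qed

lemma nonsq_mult:
  fixes rho de :: "'c::{finite,field}"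
  assumes two: "(2::'c) \<noteq> 0" and r: "\<nexists>x. x^2 = rho" and d: "\<nexists>x. x^2 = de"
  shows "\<exists>w. rho * de = w^2"
proof -
  let ?A = "UNIV - {0::'c}"
  let ?S = "(\<lambda>x. x^2) ` ?A"
  have fib: "card {y\<in>?A. y^2 = x^2} = 2" if x: "x \<in> ?A" for x
  proof -
    have "{y\<in>?A. y^2 = x^2} = {x, -x}"
    proof (rule set_eqI, rule iffI)
      fix y assume "y \<in> {y\<in>?A. y^2 = x^2}"
      then have yx: "y^2 = x^2" by blast
      have "(y - x) * (y + x) = y^2 - x^2" by (simp add: algebra_simps power2_eq_square)
      then have "(y - x) * (y + x) = 0" using yx by simp
      then have "y - x = 0 \<or> y + x = 0" by simp
      then show "y \<in> {x, -x}"
      proof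
        assume "y - x = 0" then show ?thesis by simp
      next
        assume "y + x = 0" then have "y = - x" by (simp add: eq_neg_iff_add_eq_0)
        then show ?thesis by simp
      qed
    next
      fix y assume "y \<in> {x, -x}"
      then have y: "y = x \<or> y = - x" by blast
      have x0: "x \<noteq> 0" using x by blast
      have "y \<noteq> 0" using y x0 by (metis neg_equal_0_iff_equal)
      moreover have "y^2 = x^2" using y by (metis power2_minus)
      ultimately show "y \<in> {y\<in>?A. y^2 = x^2}" by blast
    qed
    moreover have "x \<noteq> -x"
    proof -
      have x0: "x \<noteq> 0" using x by blast
      have "2 * x \<noteq> 0" using two x0 by (metis mult_eq_0_iff)
      then have "x + x \<noteq> 0" by (metis mult_2)
      then show ?thesis by (metis eq_neg_iff_add_eq_0)
    qed
    ultimately show ?thesis by simp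
  qed
  have cA: "card ?A = 2 * card ?S" by (rule card_2to1) (use fib in auto)
  have cA': "card ?A = CARD('c) - 1" by (simp add: card_Diff_singleton)
  let ?N = "?A - ?S"
  have SA: "?S \<subseteq> ?A" by auto
  have "card ?N = card ?A - card ?S" using SA by (intro card_Diff_subset) auto
  then have cN: "card ?N = card ?S" using cA by linarith
  have rN: "rho \<in> ?N" using r by (auto simp: power2_eq_square)
  have dN: "de \<in> ?N" using d by (auto simp: power2_eq_square)
  have img: "(\<lambda>x. rho * x) ` ?S \<subseteq> ?N"
  proof
    fix y assume "y \<in> (\<lambda>x. rho * x) ` ?S"
    then obtain z where z: "z \<noteq> 0" "y = rho * z^2" by auto
    have r0: "rho \<noteq> 0" using rN by auto
    have "y \<noteq> 0" using z r0 by simp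
    moreover have "y \<notin> ?S"
    proof
      assume "y \<in> ?S"
      then obtain w where "y = w^2" by auto
      then have "rho * z^2 = w^2" using z by simp
      then have "rho = (w / z)^2" using z by (simp add: power_divide eq_divide_eq)
      then show False using r by blast
    qed
    ultimately show "y \<in> ?N" by auto
  qed
  have "card ((\<lambda>x. rho * x) ` ?S) = card ?S"
    using rN by (intro card_image) (auto simp: inj_on_def)
  then have "(\<lambda>x. rho * x) ` ?S = ?N" using img cN by (intro card_subset_eq) auto
  then obtain z where "de = rho * z^2" using dN by (metis (no_types, lifting) imageE)
  then have "rho * de = (rho * z)^2" by (simp add: power2_eq_square)
  then show ?thesis by blast
qed

lemma CHAR_two_iff:
  "(2::'c::{finite,field}) = 0 \<longleftrightarrow> CHAR('c) = 2"
proof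
  assume "(2::'c) = 0"
  then have "CHAR('c) dvd 2" using of_nat_eq_0_iff_char_dvd[of 2, where 'a='c] by simp
  then show "CHAR('c) = 2" using prime_CHAR_ff[where 'c='c]
    using two_is_prime_nat primes_dvd_imp_eq by blast
next
  assume "CHAR('c) = 2"
  then show "(2::'c) = 0" using of_nat_CHAR[where 'a='c] by simp
qed

lemma odd_two_ne:
  assumes "odd CARD('c::{finite,field})"
  shows "(2::'c) \<noteq> 0"
proof
  assume "(2::'c) = 0"
  then have c2: "CHAR('c) = 2" using CHAR_two_iff by blast
  obtain k where k: "CARD('c) = CHAR('c) ^ k" using card_prime_power by blast
  have "card {0, 1::'c} \<le> CARD('c)" by (rule card_mono) auto
  then have "CARD('c) \<ge> 2" by simp
  then have "k \<noteq> 0" using k by (metis One_nat_def not_numeral_le_zero numeral_le_one_iff power_0 semiring_norm(69))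
  then show False using k c2 assms by simp
qed

lemma even_two_eq:
  assumes "CARD('c::{finite,field}) = 2 ^ h"
  shows "(2::'c) = 0"
proof -
  obtain k where k: "CARD('c) = CHAR('c) ^ k" using card_prime_power by blast
  have "card {0, 1::'c} \<le> CARD('c)" by (rule card_mono) auto
  then have "CARD('c) \<ge> 2" by simp
  then have "k \<noteq> 0" "h \<noteq> 0" using k assms by (metis One_nat_def not_numeral_le_zero numeral_le_one_iff power_0 semiring_norm(69))+
  then have "CHAR('c) dvd CHAR('c) ^ k" by (simp add: dvd_power)
  then have "CHAR('c) dvd 2 ^ h" using k assms by simp
  then have "CHAR('c) dvd 2" using prime_CHAR_ff[where 'c='c] prime_dvd_power by blast
  then have "CHAR('c) = 2" using prime_CHAR_ff[where 'c='c]
    using two_is_prime_nat primes_dvd_imp_eq by blast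
  then show ?thesis using CHAR_two_iff by blast
qed

lemma M_odd_1: "M_odd rho 1 b d = Mabcd d b (rho * b) (d::'c::field)"
  unfolding mat4_eq_iff by (simp add: M_odd_def Mabcd_def power2_eq_square power3_eq_cube algebra_simps)

lemma M_odd_m1: "M_odd rho (-1) b d = Mabcd (- d) b (- (rho * b)) (d::'c::field)"
  unfolding mat4_eq_iff by (simp add: M_odd_def Mabcd_def power2_eq_square power3_eq_cube algebra_simps)

context sett
begin

lemma odd_part:
  assumes oddq: "odd CARD('a)" and nsq: "\<nexists>x. x ^ 2 = rho"
  shows "imaginary_chord emb (span2 (vec4 1 0 rho 0) (vec4 0 1 0 rho))
        \<and> (\<forall>g \<in> stabiliser (span2 (vec4 1 0 rho 0) (vec4 0 1 0 rho)).
             \<exists>al b d. (al = -1 \<or> al = 1) \<and> (b \<noteq> 0 \<or> d \<noteq> 0) \<and> M_odd rho al b d \<in> g)"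
proof -
  have two: "(2::'a) \<noteq> 0" by (rule odd_two_ne[OF oddq])
  have twob: "(2::'b) \<noteq> 0" using two emb_numeral[of "num.Bit0 num.One"] by (metis emb_eq0_iff)
  have r0: "rho \<noteq> 0" using nsq by (metis zero_power2)
  define rho' where "rho' = inverse rho"
  have nsq': "\<nexists>x. x ^ 2 = rho'"
  proof
    assume "\<exists>x. x ^ 2 = rho'"
    then obtain x where "x ^ 2 = rho'" by blast
    then have "(inverse x) ^ 2 = rho" unfolding rho'_def by (simp add: power_inverse)
    then show False using nsq by blast
  qed
  obtain t0 where t0: "t0 \<notin> range emb" using exists_notin by blast
  obtain u v where q0: "t0 ^ 2 = emb u * t0 + emb v" using quad[OF t0] by blast
  define de where "de = u^2 + 4 * v"
  define s where "s = 2 * t0 - emb u"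
  have s2: "s ^ 2 = emb de"
  proof -
    have "s ^ 2 = 4 * t0^2 - 4 * emb u * t0 + emb u ^ 2" unfolding s_def by (simp add: algebra_simps power2_eq_square)
    also have "\<dots> = emb de" unfolding q0 de_def by (simp add: algebra_simps)
    finally show ?thesis .
  qed
  have nsqd: "\<nexists>x. x ^ 2 = de"
  proof
    assume "\<exists>x. x ^ 2 = de"
    then obtain w where w: "w ^ 2 = de" by blast
    have "(s - emb w) * (s + emb w) = s^2 - emb (w^2)" by (simp add: algebra_simps power2_eq_square)
    then have "(s - emb w) * (s + emb w) = 0" using s2 w by simp
    then have "s = emb w \<or> s = - emb w" by (metis add_eq_0_iff2 eq_iff_diff_eq_0 mult_eq_0_iff)
    then have "s = emb w \<or> s = emb (- w)" by simp
    then obtain w' where sw: "s = emb w'" by blast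
    have "t0 = (s + emb u) / 2" unfolding s_def using twob by simp
    then have "t0 = emb ((w' + u) / 2)" unfolding sw by simp
    then show False using t0 by (metis rangeI)
  qed
  obtain w where w: "rho' * de = w ^ 2" using nonsq_mult[OF two nsq' nsqd] by blast
  have d0: "de \<noteq> 0" using nsqd by (metis zero_power2)
  define t where "t = emb w * s / emb de"
  have qt: "t ^ 2 = emb 0 * t + emb rho'"
  proof -
    have "t ^ 2 = emb (w^2) * s^2 / emb de ^ 2" unfolding t_def by (simp add: power_divide power_mult_distrib)
    also have "\<dots> = emb (rho' * de) * emb de / emb de ^ 2" unfolding s2 w ..
    also have "\<dots> = emb rho'" using d0 by (simp add: power2_eq_square)
    finally show ?thesis by simp
  qed
  have t: "t \<notin> range emb"
  proof
    assume "t \<in> range emb"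
    then obtain x where "t = emb x" by blast
    then have "emb (x ^ 2) = emb rho'" using qt by simp
    then have "x ^ 2 = rho'" by (metis emb_eq_iff)
    then show False using nsq' by blast
  qed
  have l1: "span2 (vec4 1 0 rho 0) (vec4 0 1 0 rho) = Rl t"
  proof -
    have i1: "lin_indep2 (vec4 1 0 rho 0) (vec4 0 1 0 rho)"
      unfolding lin_indep2_def
    proof (intro allI impI)
      fix a b assume h: "a *s vec4 1 0 rho 0 + b *s vec4 0 1 0 rho = 0"
      have "(a *s vec4 1 0 rho 0 + b *s vec4 0 1 0 rho) $ 0 = 0" "(a *s vec4 1 0 rho 0 + b *s vec4 0 1 0 rho) $ 1 = 0"
        using h by simp_all
      then show "a = 0 \<and> b = 0" by simp
    qed
    have m1: "vec4 1 0 rho 0 = rho *s X0 0 rho' + 0 *s Y0 0 rho'"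
      using r0 by (simp add: vec4_eq_iff X0_def Y0_def rho'_def)
    have m2: "vec4 0 1 0 rho = 0 *s X0 0 rho' + rho *s Y0 0 rho'"
      using r0 by (simp add: vec4_eq_iff X0_def Y0_def rho'_def)
    have "span2 (vec4 1 0 rho 0) (vec4 0 1 0 rho) = span2 (X0 0 rho') (Y0 0 rho')"
      using line_eq[OF indep_XY i1] m1 m2 span2_I by metis
    then show ?thesis using Rl_eq[OF t qt] by simp
  qed
  have c: "imaginary_chord emb (span2 (vec4 1 0 rho 0) (vec4 0 1 0 rho))" unfolding l1 by (rule chord_Rl[OF t])
  have st: "\<exists>al b d. (al = -1 \<or> al = 1) \<and> (b \<noteq> 0 \<or> d \<noteq> 0) \<and> M_odd rho al b d \<in> g"
    if g: "g \<in> stabiliser (span2 (vec4 1 0 rho 0) (vec4 0 1 0 rho))" for g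
  proof -
    obtain c d where cd: "c \<noteq> 0 \<or> d \<noteq> 0" and m: "M1 0 rho' c d \<in> g \<or> M2 0 rho' c d \<in> g"
      using stab_form[OF t qt] g unfolding l1 by blast
    have rr: "rho * (c * rho') = c" using r0 by (simp add: rho'_def)
    have bd: "c * rho' \<noteq> 0 \<or> d \<noteq> 0" "- (c * rho') \<noteq> 0 \<or> d \<noteq> 0" using cd r0 by (auto simp: rho'_def)
    have e1: "M1 0 rho' c d = M_odd rho 1 (c * rho') d" unfolding M_odd_1 M1_def rr by simp
    have e2: "M2 0 rho' c d = M_odd rho (-1) (- (c * rho')) d" unfolding M_odd_m1 M2_def by (simp add: rr)
    show ?thesis using m e1 e2 bd by metis
  qed
  show ?thesis using c st by blast
qed

end

lemma c2_add_self: "(2::'c::field) = 0 \<Longrightarrow> x + x = (0::'c)"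
  by (metis mult_2 mult_zero_left)

lemma c2_neg: "(2::'c::field) = 0 \<Longrightarrow> - x = (x::'c)"
  by (metis c2_add_self add_eq_0_iff2 eq_neg_iff_add_eq_0)

lemma c2_minus: "(2::'c::field) = 0 \<Longrightarrow> x - y = x + (y::'c)"
  by (metis c2_neg diff_minus_eq_add)

lemma c2_three: "(2::'c::field) = 0 \<Longrightarrow> (3::'c) = 1"
proof -
  assume "(2::'c) = 0"
  moreover have "(3::'c) = 2 + 1" by simp
  ultimately show ?thesis by simp
qed

lemma c2_sq_add: "(2::'c::field) = 0 \<Longrightarrow> (x + y)^2 = x^2 + (y::'c)^2"
proof -
  assume two: "(2::'c) = 0"
  have "(x + y)^2 = x^2 + y^2 + 2 * x * y" by (simp add: power2_eq_square algebra_simps)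
  then show ?thesis using two by simp
qed

lemma c2_pow_add: "(2::'c::field) = 0 \<Longrightarrow> (x + y)^(2^i) = x^(2^i) + (y::'c)^(2^i)"
proof (induction i)
  case 0 then show ?case by simp
next
  case (Suc i)
  have "(x + y)^(2^Suc i) = ((x + y)^(2^i))^2" by (simp add: power_mult[symmetric] mult.commute)
  also have "\<dots> = (x^(2^i) + y^(2^i))^2" using Suc by simp
  also have "\<dots> = (x^(2^i))^2 + (y^(2^i))^2" using c2_sq_add[OF Suc.prems] .
  also have "\<dots> = x^(2^Suc i) + y^(2^Suc i)" by (simp add: power_mult[symmetric] mult.commute)
  finally show ?case .
qed

lemma c2_tel:
  assumes two: "(2::'c::field) = 0"
  shows "(\<Sum>i<n. (y^2 + y)^(2^i)) = y^(2^n) + (y::'c)"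
proof -
  have "(\<Sum>i<n. (y^2 + y)^(2^i)) = (\<Sum>i<n. y^(2^Suc i) - y^(2^i))"
  proof (rule sum.cong)
    fix i assume "i \<in> {..<n}"
    have "(y^2 + y)^(2^i) = (y^2)^(2^i) + y^(2^i)" by (rule c2_pow_add[OF two])
    also have "(y^2)^(2^i) = y^(2^Suc i)" by (simp add: power_mult[symmetric])
    finally show "(y^2 + y)^(2^i) = y^(2^Suc i) - y^(2^i)" using c2_minus[OF two] by simp
  qed simp
  also have "\<dots> = y^(2^n) - y" by (subst sum_lessThan_telescope[where f = "\<lambda>i. y^(2^i)"]) simp
  finally show ?thesis using c2_minus[OF two] by simp
qed

lemma trace_poly_bound:
  assumes n: "n \<ge> 1"
  shows "card {x::'c::field. (\<Sum>i<n. x^(2^i)) = 0} \<le> 2^(n-1)"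
proof -
  define p :: "'c poly" where "p = (\<Sum>i<n. monom 1 (2^i))"
  have pe: "poly p x = (\<Sum>i<n. x^(2^i))" for x by (simp add: p_def poly_sum poly_monom)
  have dle: "degree p \<le> 2^(n-1)" unfolding p_def
  proof (rule degree_sum_le)
    fix i assume "i \<in> {..<n}"
    then have "i \<le> n - 1" by auto
    then have "(2::nat)^i \<le> 2^(n-1)" by (simp add: power_increasing)
    then show "degree (monom (1::'c) (2^i)) \<le> 2^(n-1)" by (simp add: degree_monom_eq)
  qed simp
  have "coeff p (2^(n-1)) = (\<Sum>i<n. if 2^i = (2::nat)^(n-1) then 1 else 0)"
    by (simp add: p_def coeff_sum coeff_monom)
  also have "\<dots> = (\<Sum>i<n. if i = n - 1 then 1 else 0)"
    by (rule sum.cong) (auto simp: power_inject_exp)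
  also have "\<dots> = (1::'c)" using n by simp
  finally have c1: "coeff p (2^(n-1)) = 1" .
  then have p0: "p \<noteq> 0" by auto
  have "degree p = 2^(n-1)" using dle c1 by (metis le_antisym le_degree one_neq_zero)
  then show ?thesis using card_poly_roots_bound[OF p0] pe by simp
qed

lemma M_even_eq:
  assumes two: "(2::'c::field) = 0"
  shows "M_even eta al c d = Mabcd (al*c + d) (eta*c + (al+1)*d) c (d::'c)"
  unfolding mat4_eq_iff using two c2_three[OF two]
  by (simp add: M_even_def Mabcd_def Let_def)

lemma sum_split_add: "(\<Sum>i<h+k. f i) = (\<Sum>i<h. f i) + (\<Sum>i<k. f (h + i :: nat)) "
  by (induction k) (simp_all add: add.assoc)

context sett
begin

lemma emb_sum: "emb (\<Sum>i\<in>S. f i) = (\<Sum>i\<in>S. emb (f i))"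
  by (induction S rule: infinite_finite_induct) simp_all

lemma even_part:
  assumes qh: "CARD('a) = 2 ^ h" and tr: "abs_trace h eta = 1"
  shows "imaginary_chord emb (span2 (vec4 (eta+1) 1 1 0) (vec4 eta eta 0 1))
        \<and> (\<forall>g \<in> stabiliser (span2 (vec4 (eta+1) 1 1 0) (vec4 eta eta 0 1)).
             \<exists>al c d. (al = 0 \<or> al = 1) \<and> (c \<noteq> 0 \<or> d \<noteq> 0) \<and> M_even eta al c d \<in> g)"
proof -
  have two: "(2::'a) = 0" by (rule even_two_eq[OF qh])
  have twob: "(2::'b) = 0" using two emb_numeral[of "num.Bit0 num.One"] by (metis emb_zero)
  have h1: "h \<ge> 1" using qh CARD_a_ge2 by (metis One_nat_def not_less_eq_eq numeral_le_one_iff power_0 semiring_norm(69) less_one le_0_eq not_less)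
  have qb: "CARD('b) = 2 ^ (h + h)" using ext_card qh by (simp add: power_add power2_eq_square)
  define Tb :: "'b \<Rightarrow> 'b" where "Tb y = (\<Sum>i<h+h. y^(2^i))" for y
  define A :: "'b \<Rightarrow> 'b" where "A y = y^2 + y" for y
  have TA: "Tb (A y) = 0" for y
  proof -
    have "Tb (A y) = y^(2^(h+h)) + y" unfolding Tb_def A_def by (rule c2_tel[OF twob])
    also have "y^(2^(h+h)) = y" using pow_card_ff[of y] qb by simp
    finally show ?thesis using c2_add_self[OF twob] by simp
  qed
  have fib: "card {y'\<in>UNIV. A y' = A y} = 2" for y
  proof -
    have "{y'\<in>UNIV. A y' = A y} = {y, y + 1}"
    proof (rule set_eqI, rule iffI)
      fix y' assume "y' \<in> {y'\<in>UNIV. A y' = A y}"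
      then have e: "A y' = A y" by blast
      have "(y' - y) * (y' + y + 1) = A y' - A y" unfolding A_def by (simp add: algebra_simps power2_eq_square)
      then have "(y' - y) * (y' + y + 1) = 0" using e by simp
      then have "y' - y = 0 \<or> y' + y + 1 = 0" by simp
      then show "y' \<in> {y, y + 1}"
      proof
        assume "y' - y = 0" then show ?thesis by simp
      next
        assume "y' + y + 1 = 0"
        then have "y' + (y + 1) = 0" by (simp add: add.assoc)
        then have "y' = - (y + 1)" by (metis eq_neg_iff_add_eq_0)
        then have "y' = y + 1" using c2_neg[OF twob] by metis
        then show ?thesis by simp
      qed
    next
      fix y' assume "y' \<in> {y, y + 1}"
      moreover have "A (y + 1) = A y"
      proof -
        have "A (y + 1) = A y + 2 * y + 2" unfolding A_def by (simp add: algebra_simps power2_eq_square)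
        then show ?thesis using twob by simp
      qed
      ultimately show "y' \<in> {y'\<in>UNIV. A y' = A y}" by blast
    qed
    moreover have "y \<noteq> y + 1" by simp
    ultimately show ?thesis by simp
  qed
  have cA: "CARD('b) = 2 * card (range A)" by (rule card_2to1) (use fib in auto)
  have ker: "card {x::'b. (\<Sum>i<h+h. x^(2^i)) = 0} \<le> 2^(h+h-1)"
    by (rule trace_poly_bound) (use h1 in simp)
  have "range A \<subseteq> {x. Tb x = 0}" using TA by blast
  moreover have "card {x. Tb x = 0} \<le> card (range A)"
  proof -
    have "(2::nat)^(h+h) = 2^(Suc (h+h-1))" using h1 by simp
    also have "\<dots> = 2 * 2^(h+h-1)" by simp
    finally have "(2::nat)^(h+h) = 2 * 2^(h+h-1)" .
    then have "card (range A) = 2^(h+h-1)" using cA qb by simp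
    then show ?thesis using ker unfolding Tb_def by simp
  qed
  ultimately have RA: "range A = {x. Tb x = 0}" by (intro card_seteq) auto
  have "Tb (emb eta) = 0"
  proof -
    have "Tb (emb eta) = emb (\<Sum>i<h+h. eta^(2^i))" unfolding Tb_def emb_sum by simp
    also have "(\<Sum>i<h+h. eta^(2^i)) = (\<Sum>i<h. eta^(2^i)) + (\<Sum>i<h. eta^(2^(h+i)))" by (rule sum_split_add)
    also have "(\<Sum>i<h. eta^(2^(h+i))) = (\<Sum>i<h. eta^(2^i))"
    proof (rule sum.cong)
      fix i
      have "eta^(2^(h+i)) = (eta^(2^h))^(2^i)" by (simp add: power_add power_mult)
      also have "eta^(2^h) = eta" using pow_card_ff[of eta] qh by simp
      finally show "eta^(2^(h+i)) = eta^(2^i)" .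
    qed simp
    finally show ?thesis using c2_add_self[OF two] by simp
  qed
  then obtain t where tA: "A t = emb eta" using RA by (metis (mono_tags, lifting) mem_Collect_eq rangeE)
  have qt: "t ^ 2 = emb 1 * t + emb eta"
  proof -
    have "t^2 = emb eta - t" using tA unfolding A_def by (simp add: algebra_simps)
    then show ?thesis using c2_minus[OF twob] by (simp add: add.commute)
  qed
  have t: "t \<notin> range emb"
  proof
    assume "t \<in> range emb"
    then obtain x where x: "t = emb x" by blast
    then have "emb (x^2 + x) = emb eta" using tA unfolding A_def by simp
    then have "x^2 + x = eta" by (metis emb_eq_iff)
    then have "abs_trace h eta = x^(2^h) + x" unfolding abs_trace_def using c2_tel[OF two] by metis
    also have "x^(2^h) = x" using pow_card_ff[of x] qh by simp
    finally show False using tr c2_add_self[OF two] by simp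
  qed
  have l2: "span2 (vec4 (eta+1) 1 1 0) (vec4 eta eta 0 1) = Rl t"
    unfolding Rl_eq[OF t qt] X0_def Y0_def by (simp add: add.commute)
  have c: "imaginary_chord emb (span2 (vec4 (eta+1) 1 1 0) (vec4 eta eta 0 1))" unfolding l2 by (rule chord_Rl[OF t])
  have st: "\<exists>al c d. (al = 0 \<or> al = 1) \<and> (c \<noteq> 0 \<or> d \<noteq> 0) \<and> M_even eta al c d \<in> g"
    if g: "g \<in> stabiliser (span2 (vec4 (eta+1) 1 1 0) (vec4 eta eta 0 1))" for g
  proof -
    obtain c d where cd: "c \<noteq> 0 \<or> d \<noteq> 0" and m: "M1 1 eta c d \<in> g \<or> M2 1 eta c d \<in> g"
      using stab_form[OF t qt] g unfolding l2 by blast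
    have e1: "M1 1 eta c d = M_even eta 1 c d" unfolding M_even_eq[OF two] M1_def
      using two by (simp add: algebra_simps mult_2[symmetric])
    have e2: "M2 1 eta c d = M_even eta 0 c d"
    proof -
      have a1: "- d = 0 * c + d" using c2_neg[OF two, of d] by simp
      have a2: "d * 1 - c * eta = eta * c + (0 + 1) * d" using c2_minus[OF two, of d "c * eta"] by (simp add: algebra_simps)
      show ?thesis unfolding M_even_eq[OF two] M2_def a1 a2 ..
    qed
    show ?thesis using m e1 e2 cd by metis
  qed
  show ?thesis using c st by blast
qed

end

theorem theorem5p7:
  fixes emb :: "'a::{finite,field} \<Rightarrow> 'b::{finite,field}"
  assumes q5: "CARD('a) \<ge> 5"
    and ext_card: "CARD('b) = CARD('a) ^ 2"
    and emb_inj: "inj emb"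
    and emb_add: "\<And>x y. emb (x + y) = emb x + emb y"
    and emb_mult: "\<And>x y. emb (x * y) = emb x * emb y"
    and emb_one: "emb 1 = 1"
  shows
    "{L. imaginary_chord emb L} \<noteq> {}
     \<and> (\<forall>L. imaginary_chord emb L \<longrightarrow>
           orbit L = {L'. imaginary_chord emb L'}
         \<and> card (stabiliser L) = 2 * (CARD('a) + 1))
     \<and> (odd CARD('a) \<longrightarrow> (\<forall>\<rho>::'a. (\<nexists>x. x ^ 2 = \<rho>) \<longrightarrow>
          imaginary_chord emb (span2 (vec4 1 0 \<rho> 0) (vec4 0 1 0 \<rho>))
        \<and> (\<forall>g \<in> stabiliser (span2 (vec4 1 0 \<rho> 0) (vec4 0 1 0 \<rho>)).
             \<exists>\<alpha> b d. (\<alpha> = -1 \<or> \<alpha> = 1) \<and> (b \<noteq> 0 \<or> d \<noteq> 0) \<and> M_odd \<rho> \<alpha> b d \<in> g)))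
     \<and> (even CARD('a) \<longrightarrow> (\<forall>h (\<eta>::'a). CARD('a) = 2 ^ h \<longrightarrow> abs_trace h \<eta> = 1 \<longrightarrow>
          imaginary_chord emb (span2 (vec4 (\<eta>+1) 1 1 0) (vec4 \<eta> \<eta> 0 1))
        \<and> (\<forall>g \<in> stabiliser (span2 (vec4 (\<eta>+1) 1 1 0) (vec4 \<eta> \<eta> 0 1)).
             \<exists>\<alpha> c d. (\<alpha> = 0 \<or> \<alpha> = 1) \<and> (c \<noteq> 0 \<or> d \<noteq> 0) \<and> M_even \<eta> \<alpha> c d \<in> g)))"
proof -
  interpret sett emb
    using ext_card emb_inj emb_add emb_mult emb_one by unfold_locales
  have c1: "{L. imaginary_chord emb L} \<noteq> {}" using exists_notin chord_Rl by blast
  have c2: "\<forall>L. imaginary_chord emb L \<longrightarrow>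
           orbit L = {L'. imaginary_chord emb L'}
         \<and> card (stabiliser L) = 2 * (CARD('a) + 1)"
  proof (intro allI impI)
    fix L assume "imaginary_chord emb L"
    then obtain t where t: "t \<notin> range emb" "L = Rl t" using chord_is_Rl by blast
    obtain u v where q: "t ^ 2 = emb u * t + emb v" using quad[OF t(1)] by blast
    show "orbit L = {L'. imaginary_chord emb L'} \<and> card (stabiliser L) = 2 * (CARD('a) + 1)"
      using orbit_Rl[OF t(1)] stab_card[OF t(1) q] t(2) by simp
  qed
  show ?thesis using c1 c2 odd_part even_part by blast
qed

end
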